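(* Let $f\in\mathcal{A}$ and define $\hat f(u):=f(u)-uf(1)$ for $0\le u\le1$. Then (i) $\hat f\in\mathcal{B}$; (ii) $A_{0,1}(\hat f)=A_{0,1}(f)$; (iii) $\Gamma_{0,1}(\hat f)\le\Gamma_{0,1}(f)$, with equality if and only if $f(1)=0$.
   Context: $\mathcal{A}$ is the set of absolutely continuous $f:[0,1]\to\mathbb{R}$ with $f(0)=0$ and $\int_0^1f'(u)^2du<\infty$; $\mathcal{B}:=\{f\in\mathcal{A}:f(1)=0\}$. For $f\in\mathcal A$, $\overline f,\underline f$ are the least concave majorant and greatest convex minorant of $f$ on $[0,1]$; $A_{0,1}(f):=\int_0^1(\overline f-\underline f)(u)\,du$ and $\Gamma_{0,1}(f):=\int_0^1f'(u)^2du$. *)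

theory Defs
  imports "HOL-Analysis.Analysis"
begin

definition abs_cont_01 :: "(real \<Rightarrow> real) \<Rightarrow> bool" where
  "abs_cont_01 f \<longleftrightarrow>
     (\<forall>\<epsilon>>0. \<exists>\<delta>>0. \<forall>(n::nat) (a::nat \<Rightarrow> real) (b::nat \<Rightarrow> real).
        (\<forall>i<n. 0 \<le> a i \<and> a i \<le> b i \<and> b i \<le> 1) \<longrightarrow>
        (\<forall>i<n. \<forall>j<n. i \<noteq> j \<longrightarrow> b i \<le> a j \<or> b j \<le> a i) \<longrightarrow>
        (\<Sum>i<n. b i - a i) < \<delta> \<longrightarrow>
        (\<Sum>i<n. \<bar>f (b i) - f (a i)\<bar>) < \<epsilon>)"

text \<open>Gamma_{0,1}(f) = integral over [0,1] of f'(u)^2 (f' exists a.e. for AC f).\<close>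
definition Gamma01 :: "(real \<Rightarrow> real) \<Rightarrow> real" where
  "Gamma01 f = integral {0..1} (\<lambda>u. (deriv f u)\<^sup>2)"

definition classA :: "(real \<Rightarrow> real) set" where
  "classA = {f. abs_cont_01 f \<and> f 0 = 0 \<and> (\<lambda>u. (deriv f u)\<^sup>2) integrable_on {0..1}}"

definition classB :: "(real \<Rightarrow> real) set" where
  "classB = {f \<in> classA. f 1 = 0}"

definition lcm01 :: "(real \<Rightarrow> real) \<Rightarrow> real \<Rightarrow> real" where
  "lcm01 f u = Inf {g u | g. concave_on {0..1} g \<and> (\<forall>x\<in>{0..1}. f x \<le> g x)}"

definition gcm01 :: "(real \<Rightarrow> real) \<Rightarrow> real \<Rightarrow> real" where
  "gcm01 f u = Sup {g u | g. convex_on {0..1} g \<and> (\<forall>x\<in>{0..1}. g x \<le> f x)}"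

definition A01 :: "(real \<Rightarrow> real) \<Rightarrow> real" where
  "A01 f = integral {0..1} (\<lambda>u. lcm01 f u - gcm01 f u)"

end

theory Submission
  imports Defs
begin

definition famI :: "real \<Rightarrow> real \<Rightarrow> nat \<Rightarrow> (nat \<Rightarrow> real) \<Rightarrow> (nat \<Rightarrow> real) \<Rightarrow> bool" where
  "famI c d n a b \<longleftrightarrow> (\<forall>i<n. c \<le> a i \<and> a i \<le> b i \<and> b i \<le> d) \<and>
     (\<forall>i<n. \<forall>j<n. i \<noteq> j \<longrightarrow> b i \<le> a j \<or> b j \<le> a i)"

definition famsum :: "(real \<Rightarrow> real) \<Rightarrow> nat \<Rightarrow> (nat \<Rightarrow> real) \<Rightarrow> (nat \<Rightarrow> real) \<Rightarrow> real" where
  "famsum f n a b = (\<Sum>i<n. \<bar>f (b i) - f (a i)\<bar>)"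

lemma acD:
  assumes "abs_cont_01 f" "e > 0"
  obtains d where "d > 0" "\<And>n a b. famI 0 1 n a b \<Longrightarrow> (\<Sum>i<n. b i - a i) < d \<Longrightarrow> famsum f n a b < e"
proof -
  obtain d where "d > 0" and d: "\<forall>(n::nat) (a::nat \<Rightarrow> real) (b::nat \<Rightarrow> real).
        (\<forall>i<n. 0 \<le> a i \<and> a i \<le> b i \<and> b i \<le> 1) \<longrightarrow>
        (\<forall>i<n. \<forall>j<n. i \<noteq> j \<longrightarrow> b i \<le> a j \<or> b j \<le> a i) \<longrightarrow>
        (\<Sum>i<n. b i - a i) < d \<longrightarrow>
        (\<Sum>i<n. \<bar>f (b i) - f (a i)\<bar>) < e"
    using assms unfolding abs_cont_01_def by blast
  show ?thesis
    by (rule that[OF \<open>d > 0\<close>]) (use d in \<open>auto simp: famI_def famsum_def\<close>)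
qed

lemma total_length:
  assumes "c \<le> d" "finite I" "\<And>i. i \<in> I \<Longrightarrow> c \<le> a i \<and> a i \<le> b i \<and> b i \<le> d"
    and "\<And>i j. i \<in> I \<Longrightarrow> j \<in> I \<Longrightarrow> i \<noteq> j \<Longrightarrow> b i \<le> a j \<or> b j \<le> a i"
  shows "(\<Sum>i\<in>I. b i - a i) \<le> d - (c::real)"
proof (cases "I = {}")
  case True
  then show ?thesis using assms by simp
next
  case False
  then obtain i0 where "i0 \<in> I" by auto
  have cd: "c \<le> d" using assms(1) by auto
  have "(\<Sum>i\<in>I. b i - a i) = (\<Sum>i\<in>I. measure lborel {a i<..<b i})"
    using assms(3) by (intro sum.cong) auto
  also have "\<dots> = measure lborel (\<Union>i\<in>I. {a i<..<b i})"
  proof (rule measure_finite_Union[symmetric])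
    show "disjoint_family_on (\<lambda>i. {a i<..<b i}) I"
      unfolding disjoint_family_on_def
    proof (intro ballI impI)
      fix i j assume "i \<in> I" "j \<in> I" "i \<noteq> j"
      then have "b i \<le> a j \<or> b j \<le> a i" using assms(4) by auto
      then show "{a i<..<b i} \<inter> {a j<..<b j} = {}" by auto
    qed
  qed (use assms in auto)
  also have "\<dots> \<le> measure lborel {c..d}"
  proof (rule measure_mono_fmeasurable)
    show "(\<Union>i\<in>I. {a i<..<b i}) \<subseteq> {c..d}"
    proof
      fix x assume "x \<in> (\<Union>i\<in>I. {a i<..<b i})"
      then obtain i where "i \<in> I" "a i < x" "x < b i" by auto
      then show "x \<in> {c..d}" using assms(3)[of i] by auto
    qed
  qed (use assms(2) cd in \<open>auto simp: fmeasurable_def\<close>)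
  also have "\<dots> = d - c" using cd by simp
  finally show ?thesis .
qed

lemma acF:
  assumes "abs_cont_01 f" "e > 0"
  obtains d where "d > 0" "\<And>(I::'i set) a b. finite I \<Longrightarrow> (\<forall>i\<in>I. 0 \<le> a i \<and> a i \<le> b i \<and> b i \<le> 1) \<Longrightarrow>
     (\<forall>i\<in>I. \<forall>j\<in>I. i \<noteq> j \<longrightarrow> b i \<le> a j \<or> b j \<le> a i) \<Longrightarrow>
     (\<Sum>i\<in>I. b i - a i) < d \<Longrightarrow> (\<Sum>i\<in>I. \<bar>f (b i) - f (a i)\<bar>) < e"
proof -
  obtain d where d: "d > 0" "\<And>n a b. famI 0 1 n a b \<Longrightarrow> (\<Sum>i<n. b i - a i) < d \<Longrightarrow> famsum f n a b < e"
    using acD[OF assms] by blast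
  show ?thesis
  proof (rule that[OF d(1)])
    fix I :: "'i set" and a b
    assume I: "finite I" "\<forall>i\<in>I. 0 \<le> a i \<and> a i \<le> b i \<and> b i \<le> 1"
      "\<forall>i\<in>I. \<forall>j\<in>I. i \<noteq> j \<longrightarrow> b i \<le> a j \<or> b j \<le> a i" "(\<Sum>i\<in>I. b i - a i) < d"
    obtain h where h: "bij_betw h {..<card I} I"
      using ex_bij_betw_nat_finite[OF I(1)] by (metis atLeast0LessThan)
    have hI: "i < card I \<Longrightarrow> h i \<in> I" for i using h by (auto simp: bij_betw_def)
    have hinj: "i < card I \<Longrightarrow> j < card I \<Longrightarrow> i \<noteq> j \<Longrightarrow> h i \<noteq> h j" for i j
      using h by (auto simp: bij_betw_def inj_on_def)
    have fam: "famI 0 1 (card I) (a \<circ> h) (b \<circ> h)"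
      unfolding famI_def using I hI hinj by auto
    have s1: "(\<Sum>i<card I. (b \<circ> h) i - (a \<circ> h) i) = (\<Sum>i\<in>I. b i - a i)"
      using sum.reindex_bij_betw[OF h, of "\<lambda>i. b i - a i"] by simp
    have s2: "famsum f (card I) (a \<circ> h) (b \<circ> h) = (\<Sum>i\<in>I. \<bar>f (b i) - f (a i)\<bar>)"
      unfolding famsum_def using sum.reindex_bij_betw[OF h, of "\<lambda>i. \<bar>f (b i) - f (a i)\<bar>"] by simp
    show "(\<Sum>i\<in>I. \<bar>f (b i) - f (a i)\<bar>) < e"
      using d(2)[OF fam] s1 s2 I(4) by simp
  qed
qed

lemma famI_length:
  assumes "famI c d n a b" "c \<le> d"
  shows "(\<Sum>i<n. b i - a i) \<le> d - c"
  using assms unfolding famI_def by (intro total_length) auto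

lemma split_fam:
  assumes "famI c y n a b" "c \<le> m" "m \<le> y"
  shows "famI c m n (\<lambda>i. min (a i) m) (\<lambda>i. min (b i) m)"
    "famI m y n (\<lambda>i. max (a i) m) (\<lambda>i. max (b i) m)"
proof -
  show "famI c m n (\<lambda>i. min (a i) m) (\<lambda>i. min (b i) m)"
    using assms unfolding famI_def by (smt (verit))
  show "famI m y n (\<lambda>i. max (a i) m) (\<lambda>i. max (b i) m)"
    using assms unfolding famI_def by (smt (verit))
qed

lemma split_sum:
  shows "famsum f n a b \<le> famsum f n (\<lambda>i. min (a i) m) (\<lambda>i. min (b i) m) + famsum f n (\<lambda>i. max (a i) m) (\<lambda>i. max (b i) m)"
proof -
  have "\<bar>f (b i) - f (a i)\<bar> \<le> \<bar>f (min (b i) m) - f (min (a i) m)\<bar> + \<bar>f (max (b i) m) - f (max (a i) m)\<bar>" for i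
  proof -
    have "f (min (b i) m) + f (max (b i) m) = f (b i) + f m" by (cases "b i \<le> m") (auto simp: min_def max_def)
    moreover have "f (min (a i) m) + f (max (a i) m) = f (a i) + f m" by (cases "a i \<le> m") (auto simp: min_def max_def)
    ultimately show ?thesis by linarith
  qed
  then show "famsum f n a b \<le> famsum f n (\<lambda>i. min (a i) m) (\<lambda>i. min (b i) m) + famsum f n (\<lambda>i. max (a i) m) (\<lambda>i. max (b i) m)"
    unfolding famsum_def by (simp add: sum.distrib[symmetric] sum_mono)
qed

lemma famI_zero: "famI 0 0 n a b \<Longrightarrow> famsum f n a b = 0"
proof -
  assume "famI 0 0 n a b"
  then have "\<forall>i<n. a i = 0 \<and> b i = 0" unfolding famI_def by force
  then show ?thesis unfolding famsum_def by simp
qed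

lemma famI_mono: "famI c d n a b \<Longrightarrow> c' \<le> c \<Longrightarrow> d \<le> d' \<Longrightarrow> famI c' d' n a b"
  unfolding famI_def by force

lemma ac_bounded:
  assumes "abs_cont_01 f"
  obtains B where "\<And>n a b. famI 0 1 n a b \<Longrightarrow> famsum f n a b \<le> B"
proof -
  obtain d where d: "d > 0" "\<And>n a b. famI 0 1 n a b \<Longrightarrow> (\<Sum>i<n. b i - a i) < d \<Longrightarrow> famsum f n a b < 1"
    using acD[OF assms, of 1] by auto
  define h where "h = d / 2"
  have h: "h > 0" "h < d" using d unfolding h_def by auto
  have P: "\<forall>n a b. famI 0 (min 1 (real k * h)) n a b \<longrightarrow> famsum f n a b \<le> real k" for k
  proof (induction k)
    case 0
    then show ?case by (simp add: famI_zero)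
  next
    case (Suc k)
    show ?case
    proof (intro allI impI)
      fix n a b assume fam: "famI 0 (min 1 (real (Suc k) * h)) n a b"
      define m where "m = min 1 (real k * h)"
      have m: "0 \<le> m" "m \<le> min 1 (real (Suc k) * h)" using h unfolding m_def by (auto simp: algebra_simps min_def)
      note sp = split_fam[OF fam m] split_sum[of f n a b m]
      have lo: "famsum f n (\<lambda>i. min (a i) m) (\<lambda>i. min (b i) m) \<le> real k"
        using Suc.IH sp(1) unfolding m_def by blast
      have len: "(\<Sum>i<n. max (b i) m - max (a i) m) \<le> min 1 (real (Suc k) * h) - m"
        by (rule famI_length[OF sp(2)]) (use m in auto)
      also have "\<dots> \<le> h" using h unfolding m_def by (auto simp: min_def algebra_simps)
      finally have "(\<Sum>i<n. max (b i) m - max (a i) m) < d" using h by linarith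
      moreover have "famI 0 1 n (\<lambda>i. max (a i) m) (\<lambda>i. max (b i) m)"
        by (rule famI_mono[OF sp(2)]) (use m in auto)
      ultimately have "famsum f n (\<lambda>i. max (a i) m) (\<lambda>i. max (b i) m) < 1" using d(2) by blast
      then show "famsum f n a b \<le> real (Suc k)" using sp(3) lo by simp
    qed
  qed
  obtain k :: nat where k: "1 / h < real k" using reals_Archimedean2 by blast
  then have "1 \<le> real k * h" using h by (simp add: field_simps)
  then have "min 1 (real k * h) = 1" by simp
  then show ?thesis using P[of k] that by metis
qed

definition Vf :: "(real \<Rightarrow> real) \<Rightarrow> real \<Rightarrow> real" where
  "Vf f x = Sup {famsum f n a b | n a b. famI 0 x n a b}"

lemma Vf_upper:
  assumes "abs_cont_01 f" "x \<le> 1" "famI 0 x n a b"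
  shows "famsum f n a b \<le> Vf f x"
proof -
  obtain B where B: "\<And>n a b. famI 0 1 n a b \<Longrightarrow> famsum f n a b \<le> B" using ac_bounded[OF assms(1)] by blast
  have "bdd_above {famsum f n a b | n a b. famI 0 x n a b}"
    by (rule bdd_aboveI[of _ B]) (use assms B famI_mono in force)
  then show ?thesis unfolding Vf_def
    by (rule cSup_upper[rotated]) (use assms in auto)
qed

lemma Vf_least:
  assumes "\<And>n a b. famI 0 x n a b \<Longrightarrow> famsum f n a b \<le> C"
  shows "Vf f x \<le> C"
proof -
  have "famI 0 x 0 a b" for a b unfolding famI_def by auto
  then have "{famsum f n a b | n a b. famI 0 x n a b} \<noteq> {}" by blast
  then show ?thesis unfolding Vf_def
    by (rule cSup_least) (use assms in auto)
qed

lemma Vf_nonneg: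
  assumes "abs_cont_01 f" "x \<le> 1"
  shows "0 \<le> Vf f x"
proof -
  have "famI 0 x 0 a b" for a b unfolding famI_def by auto
  then show ?thesis using Vf_upper[OF assms, of 0] by (simp add: famsum_def)
qed

lemma Vf_step:
  assumes "abs_cont_01 f" "0 \<le> x" "x \<le> y" "y \<le> 1"
  shows "Vf f x + \<bar>f y - f x\<bar> \<le> Vf f y"
proof -
  have "famsum f n a b \<le> Vf f y - \<bar>f y - f x\<bar>" if fam: "famI 0 x n a b" for n a b
  proof -
    define a' where "a' = a(n := x)"
    define b' where "b' = b(n := y)"
    have "famI 0 y (Suc n) a' b'"
      using fam assms unfolding famI_def a'_def b'_def by (auto simp: less_Suc_eq)
    then have "famsum f (Suc n) a' b' \<le> Vf f y" using Vf_upper assms by blast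
    moreover have "famsum f (Suc n) a' b' = famsum f n a b + \<bar>f y - f x\<bar>"
      unfolding famsum_def a'_def b'_def by simp
    ultimately show ?thesis by simp
  qed
  then have "Vf f x \<le> Vf f y - \<bar>f y - f x\<bar>" by (rule Vf_least)
  then show ?thesis by simp
qed

lemma Vf_cont_step:
  assumes "abs_cont_01 f" "e > 0"
  obtains d where "d > 0" "\<And>x y. 0 \<le> x \<Longrightarrow> x \<le> y \<Longrightarrow> y \<le> 1 \<Longrightarrow> y - x < d \<Longrightarrow> Vf f y \<le> Vf f x + e"
proof -
  obtain d where d: "d > 0" "\<And>n a b. famI 0 1 n a b \<Longrightarrow> (\<Sum>i<n. b i - a i) < d \<Longrightarrow> famsum f n a b < e"
    using acD[OF assms] by blast
  show ?thesis
  proof (rule that[OF d(1)])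
    fix x y assume xy: "0 \<le> x" "x \<le> y" "y \<le> 1" "y - x < d"
    show "Vf f y \<le> Vf f x + e"
    proof (rule Vf_least)
      fix n a b assume fam: "famI 0 y n a b"
      note sp = split_fam[OF fam xy(1,2)] split_sum[of f n a b x]
      have "famsum f n (\<lambda>i. min (a i) x) (\<lambda>i. min (b i) x) \<le> Vf f x"
        using Vf_upper[OF assms(1) _ sp(1)] xy by simp
      moreover have "famsum f n (\<lambda>i. max (a i) x) (\<lambda>i. max (b i) x) < e"
      proof (rule d(2))
        show "famI 0 1 n (\<lambda>i. max (a i) x) (\<lambda>i. max (b i) x)"
          by (rule famI_mono[OF sp(2)]) (use xy in auto)
        show "(\<Sum>i<n. max (b i) x - max (a i) x) < d"
          using famI_length[OF sp(2)] xy by fastforce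
      qed
      ultimately show "famsum f n a b \<le> Vf f x + e" using sp(3) by simp
    qed
  qed
qed

lemma Vf_mono:
  assumes "abs_cont_01 f" "0 \<le> x" "x \<le> y" "y \<le> 1"
  shows "Vf f x \<le> Vf f y"
  using Vf_step[OF assms] by simp

lemma Vf_cont: assumes "abs_cont_01 f" shows "continuous_on {0..1} (Vf f)"
  unfolding continuous_on_iff
proof (intro ballI allI impI)
  fix x e :: real assume x: "x \<in> {0..1}" and e: "e > 0"
  obtain d where d: "d > 0" "\<And>x y. 0 \<le> x \<Longrightarrow> x \<le> y \<Longrightarrow> y \<le> 1 \<Longrightarrow> y - x < d \<Longrightarrow> Vf f y \<le> Vf f x + e/2"
    using Vf_cont_step[OF assms, of "e/2"] e by auto
  show "\<exists>d>0. \<forall>x'\<in>{0..1}. dist x' x < d \<longrightarrow> dist (Vf f x') (Vf f x) < e"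
  proof (intro exI conjI ballI impI)
    fix y assume y: "y \<in> {0..1}" "dist y x < d"
    show "dist (Vf f y) (Vf f x) < e"
    proof (cases "x \<le> y")
      case True
      then show ?thesis using d(2)[of x y] Vf_mono[OF assms, of x y] x y e by (auto simp: dist_real_def)
    next
      case False
      then show ?thesis using d(2)[of y x] Vf_mono[OF assms, of y x] x y e by (auto simp: dist_real_def)
    qed
  qed (use d in auto)
qed

lemma ac_cont: assumes "abs_cont_01 f" shows "continuous_on {0..1} f"
  unfolding continuous_on_iff
proof (intro ballI allI impI)
  fix x e :: real assume x: "x \<in> {0..1}" and e: "e > 0"
  obtain d where d: "d > 0" "\<forall>x'\<in>{0..1}. dist x' x < d \<longrightarrow> dist (Vf f x') (Vf f x) < e"
    using Vf_cont[OF assms] x e unfolding continuous_on_iff by blast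
  show "\<exists>d>0. \<forall>x'\<in>{0..1}. dist x' x < d \<longrightarrow> dist (f x') (f x) < e"
  proof (intro exI conjI ballI impI)
    fix y assume y: "y \<in> {0..1}" "dist y x < d"
    have "dist (Vf f y) (Vf f x) < e" using d y by auto
    then show "dist (f y) (f x) < e"
      using Vf_step[OF assms, of x y] Vf_step[OF assms, of y x] x y
      by (cases "x \<le> y") (auto simp: dist_real_def)
  qed (use d in auto)
qed


definition lowq :: "(real \<Rightarrow> real) \<Rightarrow> real \<Rightarrow> real \<Rightarrow> bool" where
  "lowq G s x \<longleftrightarrow> (\<forall>d>0. \<exists>u v. u < x \<and> x < v \<and> v - u < d \<and> G v - G u < s * (v - u))"

definition highq :: "(real \<Rightarrow> real) \<Rightarrow> real \<Rightarrow> real \<Rightarrow> bool" where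
  "highq G r x \<longleftrightarrow> (\<forall>d>0. \<exists>u v. u < x \<and> x < v \<and> v - u < d \<and> r * (v - u) < G v - G u)"

lemma deriv_from_quot:
  fixes G :: "real \<Rightarrow> real"
  assumes cont: "continuous_on UNIV G"
    and q: "\<And>e. e > 0 \<Longrightarrow> \<exists>d>0. \<forall>u v. u < x \<longrightarrow> x < v \<longrightarrow> v - u < d \<longrightarrow> \<bar>G v - G u - L*(v-u)\<bar> \<le> e*(v-u)"
  shows "(G has_real_derivative L) (at x)"
proof -
  have Gc: "(G \<longlongrightarrow> G y) (at y within T)" for y T
    using cont by (meson UNIV_I continuous_on_def tendsto_within_subset subset_UNIV)
  have key: "\<exists>d>0. \<forall>y. y \<noteq> x \<longrightarrow> \<bar>y - x\<bar> < d \<longrightarrow> \<bar>G y - G x - L*(y-x)\<bar> \<le> e*\<bar>y-x\<bar>" if e: "e > 0" for e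
  proof -
    obtain d where d: "d > 0" "\<forall>u v. u < x \<longrightarrow> x < v \<longrightarrow> v - u < d \<longrightarrow> \<bar>G v - G u - L*(v-u)\<bar> \<le> e*(v-u)"
      using q[OF e] by blast
    show ?thesis
    proof (intro exI[of _ "d/2"] conjI allI impI)
      fix y assume y: "y \<noteq> x" "\<bar>y - x\<bar> < d/2"
      show "\<bar>G y - G x - L*(y-x)\<bar> \<le> e*\<bar>y-x\<bar>"
      proof (cases "x < y")
        case True
        let ?phi = "\<lambda>u. \<bar>G y - G u - L*(y-u)\<bar> - e*(y-u)"
        have "(?phi \<longlongrightarrow> ?phi x) (at_left x)"
          by (intro tendsto_intros Gc)
        moreover have "eventually (\<lambda>u. ?phi u \<le> 0) (at_left x)"
        proof -
          have "eventually (\<lambda>u. u \<in> {x - d/2<..<x}) (at_left x)"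
            using d by (intro eventually_at_left_real) auto
          then show ?thesis
          proof (rule eventually_mono)
            fix u assume "u \<in> {x - d/2<..<x}"
            then have "u < x" "x < y" "y - u < d" using True y by auto
            then have "\<bar>G y - G u - L*(y-u)\<bar> \<le> e*(y-u)" using d(2) by blast
            then show "?phi u \<le> 0" by simp
          qed
        qed
        ultimately have "?phi x \<le> 0" by (intro tendsto_upperbound) auto
        then show ?thesis using True by (simp add: abs_minus_commute)
      next
        case False
        then have yx: "y < x" using y by auto
        let ?phi = "\<lambda>v. \<bar>G v - G y - L*(v-y)\<bar> - e*(v-y)"
        have "(?phi \<longlongrightarrow> ?phi x) (at_right x)"
          by (intro tendsto_intros Gc)
        moreover have "eventually (\<lambda>v. ?phi v \<le> 0) (at_right x)"
        proof -
          have "eventually (\<lambda>v. v \<in> {x<..<x + d/2}) (at_right x)"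
            using d by (intro eventually_at_right_real) auto
          then show ?thesis
          proof (rule eventually_mono)
            fix v assume "v \<in> {x<..<x + d/2}"
            then have "y < x" "x < v" "v - y < d" using yx y by auto
            then have "\<bar>G v - G y - L*(v-y)\<bar> \<le> e*(v-y)" using d(2) by blast
            then show "?phi v \<le> 0" by simp
          qed
        qed
        ultimately have "?phi x \<le> 0" by (intro tendsto_upperbound) auto
        then have "\<bar>G x - G y - L*(x-y)\<bar> \<le> e*(x-y)" by simp
        moreover have "\<bar>G y - G x - L*(y-x)\<bar> = \<bar>G x - G y - L*(x-y)\<bar>" by (simp add: abs_minus_commute algebra_simps)
        ultimately show ?thesis using yx by simp
      qed
    qed (use d in auto)
  qed
  show ?thesis
    unfolding has_field_derivative_iff LIM_eq
  proof (intro allI impI)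
    fix r :: real assume r: "r > 0"
    obtain d where d: "d > 0" "\<forall>y. y \<noteq> x \<longrightarrow> \<bar>y - x\<bar> < d \<longrightarrow> \<bar>G y - G x - L*(y-x)\<bar> \<le> (r/2)*\<bar>y-x\<bar>"
      using key[of "r/2"] r by auto
    show "\<exists>s>0. \<forall>y. y \<noteq> x \<and> norm (y - x) < s \<longrightarrow> norm ((G y - G x) / (y - x) - L) < r"
    proof (intro exI[of _ d] conjI allI impI)
      fix y assume y: "y \<noteq> x \<and> norm (y - x) < d"
      then have yx: "y - x \<noteq> 0" by auto
      have "(G y - G x) / (y - x) - L = (G y - G x - L*(y-x)) / (y - x)"
        using yx by (simp add: field_simps)
      then have "norm ((G y - G x) / (y - x) - L) = \<bar>G y - G x - L*(y-x)\<bar> / \<bar>y - x\<bar>"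
        by (simp add: abs_divide)
      also have "\<dots> \<le> (r/2)*\<bar>y-x\<bar> / \<bar>y - x\<bar>"
        using d(2) y by (intro divide_right_mono) auto
      also have "\<dots> = r/2" using yx by simp
      finally show "norm ((G y - G x) / (y - x) - L) < r" using r by simp
    qed (use d in auto)
  qed
qed

lemma lowq_mono: "lowq G s x \<Longrightarrow> s \<le> s' \<Longrightarrow> lowq G s' x"
  unfolding lowq_def
proof (intro allI impI)
  fix d :: real assume "\<forall>d>0. \<exists>u v. u < x \<and> x < v \<and> v - u < d \<and> G v - G u < s * (v - u)" "s \<le> s'" "d > 0"
  then obtain u v where "u < x \<and> x < v \<and> v - u < d \<and> G v - G u < s * (v - u)" by blast
  moreover have "s * (v - u) \<le> s' * (v - u)" using \<open>s \<le> s'\<close> calculation by (intro mult_right_mono) auto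
  ultimately show "\<exists>u v. u < x \<and> x < v \<and> v - u < d \<and> G v - G u < s' * (v - u)"
    by (intro exI[of _ u] exI[of _ v]) linarith
qed

lemma highq_mono: "highq G r x \<Longrightarrow> r' \<le> r \<Longrightarrow> highq G r' x"
  unfolding highq_def
proof (intro allI impI)
  fix d :: real assume "\<forall>d>0. \<exists>u v. u < x \<and> x < v \<and> v - u < d \<and> r * (v - u) < G v - G u" "r' \<le> r" "d > 0"
  then obtain u v where "u < x \<and> x < v \<and> v - u < d \<and> r * (v - u) < G v - G u" by blast
  moreover have "r' * (v - u) \<le> r * (v - u)" using \<open>r' \<le> r\<close> calculation by (intro mult_right_mono) auto
  ultimately show "\<exists>u v. u < x \<and> x < v \<and> v - u < d \<and> r' * (v - u) < G v - G u"
    by (intro exI[of _ u] exI[of _ v]) linarith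
qed

lemma highq_neg: assumes "mono G" "r < 0" shows "highq G r x"
  unfolding highq_def
proof (intro allI impI)
  fix d :: real assume d: "d > 0"
  have le: "x - d/4 \<le> x + d/4" using d by simp
  have "G (x - d/4) \<le> G (x + d/4)" using monoD[OF assms(1) le] .
  moreover have "r * ((x + d/4) - (x - d/4)) < 0" using assms(2) d by (simp add: mult_neg_pos)
  moreover have "x - d/4 < x" "x < x + d/4" "(x + d/4) - (x - d/4) < d" using d by simp_all
  ultimately show "\<exists>u v. u < x \<and> x < v \<and> v - u < d \<and> r * (v - u) < G v - G u"
    by (intro exI[of _ "x - d/4"] exI[of _ "x + d/4"]) linarith
qed

lemma not_lowq_nonpos: assumes "mono G" "s \<le> 0" shows "\<not> lowq G s x"
proof
  assume "lowq G s x"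
  then have "\<exists>u v. u < x \<and> x < v \<and> v - u < 1 \<and> G v - G u < s * (v - u)" unfolding lowq_def by simp
  then obtain u v where uv: "u < x" "x < v" "G v - G u < s * (v - u)" by blast
  have le: "u \<le> v" using uv by simp
  have "G u \<le> G v" using monoD[OF assms(1) le] .
  moreover have "s * (v - u) \<le> 0" using assms(2) le by (simp add: mult_nonpos_nonneg)
  ultimately show False using uv by linarith
qed

lemma nondiff_cases:
  fixes G :: "real \<Rightarrow> real"
  assumes mono: "mono G" and cont: "continuous_on UNIV G"
    and nd: "\<not> (\<exists>L. (G has_real_derivative L) (at x))"
  shows "(\<exists>s\<in>\<rat>. \<exists>r\<in>\<rat>. s < r \<and> lowq G s x \<and> highq G r x) \<or> (\<forall>M::nat. highq G (real M) x)"
proof (rule ccontr)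
  assume nc: "\<not> ?thesis"
  then have A: "\<And>s r. s \<in> \<rat> \<Longrightarrow> r \<in> \<rat> \<Longrightarrow> s < r \<Longrightarrow> lowq G s x \<Longrightarrow> highq G r x \<Longrightarrow> False" by blast
  from nc obtain M :: nat where M: "\<not> highq G (real M) x" by blast
  define H where "H = {r. highq G r x}"
  have Hne: "H \<noteq> {}" using highq_neg[OF mono, of "-1"] unfolding H_def by auto
  have Hbdd: "bdd_above H"
  proof (rule bdd_aboveI[of _ "real M"])
    fix r assume "r \<in> H"
    then show "r \<le> real M" using M highq_mono unfolding H_def by (metis mem_Collect_eq nle_le)
  qed
  define L where "L = Sup H"
  have c1: "\<not> highq G (L + e) x" if "e > 0" for e
  proof
    assume "highq G (L + e) x"
    then have "L + e \<in> H" unfolding H_def by simp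
    then have "L + e \<le> L" unfolding L_def using Hbdd by (rule cSup_upper)
    then show False using that by simp
  qed
  have c2: "\<not> lowq G (L - e) x" if e: "e > 0" for e
  proof
    assume low: "lowq G (L - e) x"
    obtain s where s: "s \<in> \<rat>" "L - e < s" "s < L - e/2" using Rats_dense_in_real[of "L - e" "L - e/2"] e by auto
    obtain r where r: "r \<in> \<rat>" "s < r" "r < L" using Rats_dense_in_real[of s L] s e by auto
    obtain h where h: "h \<in> H" "r < h" using r(3) less_cSup_iff[OF Hne Hbdd] unfolding L_def by blast
    have "highq G r x" using h highq_mono unfolding H_def by (metis less_eq_real_def mem_Collect_eq)
    moreover have "lowq G s x" using lowq_mono[OF low] s by simp
    ultimately show False using A s r by blast
  qed
  have "(G has_real_derivative L) (at x)"
  proof (rule deriv_from_quot[OF cont])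
    fix e :: real assume e: "e > 0"
    obtain d1 where d1: "d1 > 0" "\<forall>u v. u < x \<longrightarrow> x < v \<longrightarrow> v - u < d1 \<longrightarrow> \<not> (L + e) * (v - u) < G v - G u"
      using c1[OF e] unfolding highq_def by blast
    obtain d2 where d2: "d2 > 0" "\<forall>u v. u < x \<longrightarrow> x < v \<longrightarrow> v - u < d2 \<longrightarrow> \<not> G v - G u < (L - e) * (v - u)"
      using c2[OF e] unfolding lowq_def by blast
    show "\<exists>d>0. \<forall>u v. u < x \<longrightarrow> x < v \<longrightarrow> v - u < d \<longrightarrow> \<bar>G v - G u - L*(v-u)\<bar> \<le> e*(v-u)"
    proof (intro exI[of _ "min d1 d2"] conjI allI impI)
      fix u v assume uv: "u < x" "x < v" "v - u < min d1 d2"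
      have n1: "\<not> (L + e) * (v - u) < G v - G u" using d1(2) uv by simp
      have n2: "\<not> G v - G u < (L - e) * (v - u)" using d2(2) uv by simp
      from n1 n2 have "G v - G u \<le> (L + e) * (v - u)" "(L - e) * (v - u) \<le> G v - G u" by linarith+
      then show "\<bar>G v - G u - L*(v-u)\<bar> \<le> e*(v-u)" by (simp add: algebra_simps abs_le_iff)
    qed (use d1 d2 in auto)
  qed
  then show False using nd by blast
qed


lemma vitali_intervals:
  fixes S U :: "real set" and P :: "real \<Rightarrow> real \<Rightarrow> bool"
  assumes U: "open U" "S \<subseteq> U"
    and P: "\<And>x d. x \<in> S \<Longrightarrow> d > 0 \<Longrightarrow> \<exists>u v. u < x \<and> x < v \<and> v - u < d \<and> P u v"
  obtains C where "countable C" "\<And>i. i \<in> C \<Longrightarrow> fst i < snd i \<and> {fst i..snd i} \<subseteq> U \<and> P (fst i) (snd i)"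
    "disjoint_family_on (\<lambda>i. {fst i..snd i}) C" "negligible (S - (\<Union>i\<in>C. {fst i..snd i}))"
proof -
  define K where "K = {i. fst i < snd i \<and> {fst i..snd i} \<subseteq> U \<and> P (fst i) (snd i)}"
  define a where "a = (\<lambda>i::real\<times>real. (fst i + snd i) / 2)"
  define r where "r = (\<lambda>i::real\<times>real. (snd i - fst i) / 2)"
  have cb: "cball (a i) (r i) = {fst i..snd i}" for i
  proof -
    have "a i - r i = fst i" "a i + r i = snd i" unfolding a_def r_def by (simp_all add: field_simps)
    then show ?thesis by (simp add: cball_eq_atLeastAtMost)
  qed
  have rpos: "\<And>i. i \<in> K \<Longrightarrow> 0 < r i" unfolding K_def r_def by auto
  have cov: "\<exists>i. i \<in> K \<and> x \<in> cball (a i) (r i) \<and> r i < d" if x: "x \<in> S" and d: "0 < d" for x d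
  proof -
    obtain e where e: "e > 0" "ball x e \<subseteq> U" using U x open_contains_ball by blast
    obtain u v where uv: "u < x" "x < v" "v - u < min d e" "P u v" using P[OF x, of "min d e"] d e by auto
    have sub: "{u..v} \<subseteq> U"
    proof
      fix y assume "y \<in> {u..v}"
      then have "dist x y < e" using uv by (auto simp: dist_real_def)
      then show "y \<in> U" using e by auto
    qed
    have "x \<in> cball (a (u,v)) (r (u,v))" unfolding cb using uv by auto
    moreover have "(u,v) \<in> K" using uv sub unfolding K_def by auto
    moreover have "r (u,v) < d" using uv unfolding r_def by auto
    ultimately show ?thesis by blast
  qed
  obtain C where C: "countable C" "C \<subseteq> K"
     "pairwise (\<lambda>i j. disjnt (cball (a i) (r i)) (cball (a j) (r j))) C"
     "negligible(S - (\<Union>i \<in> C. cball (a i) (r i)))"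
    using Vitali_covering_theorem_cballs[of K r S a, OF rpos cov] by blast
  show ?thesis
  proof (rule that[OF C(1)])
    show "\<And>i. i \<in> C \<Longrightarrow> fst i < snd i \<and> {fst i..snd i} \<subseteq> U \<and> P (fst i) (snd i)"
      using C(2) unfolding K_def by auto
    show "disjoint_family_on (\<lambda>i. {fst i..snd i}) C"
      using C(3) unfolding cb disjoint_family_on_def pairwise_def disjnt_def by auto
    show "negligible (S - (\<Union>i\<in>C. {fst i..snd i}))"
      using C(4) unfolding cb .
  qed
qed

lemma meas_closed_union:
  assumes "countable C" "\<And>i. i \<in> C \<Longrightarrow> fst i < snd i" "disjoint_family_on (\<lambda>i. {fst i..snd i}) C"
  shows "emeasure lebesgue (\<Union>i\<in>C. {fst i..snd i}) = (\<integral>\<^sup>+i. ennreal (snd i - fst i) \<partial>count_space C)"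
proof -
  have "emeasure lebesgue (\<Union>i\<in>C. {fst i..snd i}) = (\<integral>\<^sup>+i. emeasure lebesgue {fst i..snd i} \<partial>count_space C)"
    by (rule emeasure_UN_countable) (use assms in auto)
  also have "\<dots> = (\<integral>\<^sup>+i. ennreal (snd i - fst i) \<partial>count_space C)"
    using assms(2) by (intro nn_integral_cong) (auto simp: less_imp_le)
  finally show ?thesis .
qed

lemma meas_halfopen_union:
  fixes G :: "real \<Rightarrow> real"
  assumes G: "mono G" "continuous_on UNIV G"
    and "countable C" "\<And>i. i \<in> C \<Longrightarrow> fst i < snd i" "disjoint_family_on (\<lambda>i. {fst i..snd i}) C"
  shows "emeasure (interval_measure G) (\<Union>i\<in>C. {fst i<..snd i}) = (\<integral>\<^sup>+i. ennreal (G (snd i) - G (fst i)) \<partial>count_space C)"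
proof -
  have rc: "continuous (at_right a) G" for a
    using G(2) by (meson UNIV_I continuous_on_eq_continuous_within continuous_within_subset subset_UNIV)
  have mo: "x \<le> y \<Longrightarrow> G x \<le> G y" for x y using G(1) by (simp add: monoD)
  have "emeasure (interval_measure G) (\<Union>i\<in>C. {fst i<..snd i}) = (\<integral>\<^sup>+i. emeasure (interval_measure G) {fst i<..snd i} \<partial>count_space C)"
  proof (rule emeasure_UN_countable)
    show "disjoint_family_on (\<lambda>i. {fst i<..snd i}) C"
      unfolding disjoint_family_on_def
    proof (intro ballI impI)
      fix i j assume "i \<in> C" "j \<in> C" "i \<noteq> j"
      then have "{fst i..snd i} \<inter> {fst j..snd j} = {}" using assms(5) unfolding disjoint_family_on_def by blast
      moreover have "{fst i<..snd i} \<subseteq> {fst i..snd i}" "{fst j<..snd j} \<subseteq> {fst j..snd j}" by auto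
      ultimately show "{fst i<..snd i} \<inter> {fst j<..snd j} = {}" by blast
    qed
  qed (use assms in auto)
  also have "\<dots> = (\<integral>\<^sup>+i. ennreal (G (snd i) - G (fst i)) \<partial>count_space C)"
    using assms(4) by (intro nn_integral_cong) (auto simp: less_imp_le emeasure_interval_measure_Ioc mo rc)
  finally show ?thesis .
qed


lemma low_cover:
  fixes G :: "real \<Rightarrow> real"
  assumes G: "mono G" "continuous_on UNIV G" and U: "open U" "S \<subseteq> U" and s: "0 \<le> s"
    and low: "\<And>x. x \<in> S \<Longrightarrow> lowq G s x"
  obtains C where "countable C" "\<And>i. i \<in> C \<Longrightarrow> fst i < snd i \<and> {fst i..snd i} \<subseteq> U"
    "disjoint_family_on (\<lambda>i. {fst i..snd i}) C" "negligible (S - (\<Union>i\<in>C. {fst i..snd i}))"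
    "emeasure (interval_measure G) (\<Union>i\<in>C. {fst i<..snd i}) \<le> ennreal s * emeasure lebesgue (\<Union>i\<in>C. {fst i..snd i})"
proof -
  have P: "\<exists>u v. u < x \<and> x < v \<and> v - u < d \<and> G v - G u < s * (v - u)" if "x \<in> S" "d > 0" for x d
    using low[OF that(1)] that(2) unfolding lowq_def by blast
  obtain C where C: "countable C" "\<And>i. i \<in> C \<Longrightarrow> fst i < snd i \<and> {fst i..snd i} \<subseteq> U \<and> G (snd i) - G (fst i) < s * (snd i - fst i)"
    "disjoint_family_on (\<lambda>i. {fst i..snd i}) C" "negligible (S - (\<Union>i\<in>C. {fst i..snd i}))"
    using vitali_intervals[OF U, of "\<lambda>u v. G v - G u < s * (v - u)", OF P] by blast
  have lt: "\<And>i. i \<in> C \<Longrightarrow> fst i < snd i" using C(2) by blast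
  have "emeasure (interval_measure G) (\<Union>i\<in>C. {fst i<..snd i}) = (\<integral>\<^sup>+i. ennreal (G (snd i) - G (fst i)) \<partial>count_space C)"
    by (rule meas_halfopen_union[OF G C(1) lt C(3)])
  also have "\<dots> \<le> (\<integral>\<^sup>+i. ennreal s * ennreal (snd i - fst i) \<partial>count_space C)"
  proof (rule nn_integral_mono)
    fix i assume "i \<in> space (count_space C)"
    then have i: "i \<in> C" by simp
    have "ennreal (G (snd i) - G (fst i)) \<le> ennreal (s * (snd i - fst i))"
      using C(2)[OF i] by (intro ennreal_leI) simp
    also have "\<dots> = ennreal s * ennreal (snd i - fst i)" using s lt[OF i] by (simp add: ennreal_mult)
    finally show "ennreal (G (snd i) - G (fst i)) \<le> ennreal s * ennreal (snd i - fst i)" .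
  qed
  also have "\<dots> = ennreal s * (\<integral>\<^sup>+i. ennreal (snd i - fst i) \<partial>count_space C)"
    by (rule nn_integral_cmult) simp
  also have "\<dots> = ennreal s * emeasure lebesgue (\<Union>i\<in>C. {fst i..snd i})"
    by (simp add: meas_closed_union[OF C(1) lt C(3)])
  finally show ?thesis using that C by blast
qed

lemma high_cover:
  fixes G :: "real \<Rightarrow> real"
  assumes G: "mono G" "continuous_on UNIV G" and U: "open U" "S \<subseteq> U" and r: "0 \<le> r"
    and high: "\<And>x. x \<in> S \<Longrightarrow> highq G r x"
  obtains C where "countable C" "\<And>i. i \<in> C \<Longrightarrow> fst i < snd i \<and> {fst i..snd i} \<subseteq> U"
    "disjoint_family_on (\<lambda>i. {fst i..snd i}) C" "negligible (S - (\<Union>i\<in>C. {fst i..snd i}))"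
    "ennreal r * emeasure lebesgue (\<Union>i\<in>C. {fst i..snd i}) \<le> emeasure (interval_measure G) (\<Union>i\<in>C. {fst i<..snd i})"
proof -
  have P: "\<exists>u v. u < x \<and> x < v \<and> v - u < d \<and> r * (v - u) < G v - G u" if "x \<in> S" "d > 0" for x d
    using high[OF that(1)] that(2) unfolding highq_def by blast
  obtain C where C: "countable C" "\<And>i. i \<in> C \<Longrightarrow> fst i < snd i \<and> {fst i..snd i} \<subseteq> U \<and> r * (snd i - fst i) < G (snd i) - G (fst i)"
    "disjoint_family_on (\<lambda>i. {fst i..snd i}) C" "negligible (S - (\<Union>i\<in>C. {fst i..snd i}))"
    using vitali_intervals[OF U, of "\<lambda>u v. r * (v - u) < G v - G u", OF P] by blast
  have lt: "\<And>i. i \<in> C \<Longrightarrow> fst i < snd i" using C(2) by blast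
  have "ennreal r * emeasure lebesgue (\<Union>i\<in>C. {fst i..snd i}) = ennreal r * (\<integral>\<^sup>+i. ennreal (snd i - fst i) \<partial>count_space C)"
    by (simp add: meas_closed_union[OF C(1) lt C(3)])
  also have "\<dots> = (\<integral>\<^sup>+i. ennreal r * ennreal (snd i - fst i) \<partial>count_space C)"
    by (rule nn_integral_cmult[symmetric]) simp
  also have "\<dots> \<le> (\<integral>\<^sup>+i. ennreal (G (snd i) - G (fst i)) \<partial>count_space C)"
  proof (rule nn_integral_mono)
    fix i assume "i \<in> space (count_space C)"
    then have i: "i \<in> C" by simp
    have "ennreal r * ennreal (snd i - fst i) = ennreal (r * (snd i - fst i))" using r lt[OF i] by (simp add: ennreal_mult)
    also have "\<dots> \<le> ennreal (G (snd i) - G (fst i))"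
      using C(2)[OF i] by (intro ennreal_leI) simp
    finally show "ennreal r * ennreal (snd i - fst i) \<le> ennreal (G (snd i) - G (fst i))" .
  qed
  also have "\<dots> = emeasure (interval_measure G) (\<Union>i\<in>C. {fst i<..snd i})"
    by (rule meas_halfopen_union[OF G C(1) lt C(3), symmetric])
  finally show ?thesis using that C by blast
qed

lemma dini_set_sets:
  fixes Q :: "real \<Rightarrow> real \<Rightarrow> bool"
  shows "{x. \<forall>d>0. \<exists>u v. u < x \<and> x < v \<and> v - u < d \<and> Q u v} \<in> sets lebesgue"
proof -
  define Low where "Low n = {x. \<exists>u v. u < x \<and> x < v \<and> v - u < 1 / real (Suc n) \<and> Q u v}" for n :: nat
  have op: "open (Low n)" for n
  proof -
    have "Low n = (\<Union>p\<in>{p. snd p - fst p < 1 / real (Suc n) \<and> Q (fst p) (snd p)}. {fst p<..<snd p})"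
      unfolding Low_def by force
    then show ?thesis by auto
  qed
  have eq: "{x. \<forall>d>0. \<exists>u v. u < x \<and> x < v \<and> v - u < d \<and> Q u v} = (\<Inter>n. Low n)"
  proof (intro equalityI subsetI)
    fix x assume "x \<in> {x. \<forall>d>0. \<exists>u v. u < x \<and> x < v \<and> v - u < d \<and> Q u v}"
    then show "x \<in> (\<Inter>n. Low n)" unfolding Low_def by simp
  next
    fix x assume x: "x \<in> (\<Inter>n. Low n)"
    show "x \<in> {x. \<forall>d>0. \<exists>u v. u < x \<and> x < v \<and> v - u < d \<and> Q u v}"
    proof (intro CollectI allI impI)
      fix d :: real assume "d > 0"
      then obtain n where n: "1 / real (Suc n) < d" using nat_approx_posE by blast
      from x have "x \<in> Low n" by blast
      then obtain u v where "u < x" "x < v" "v - u < 1 / real (Suc n)" "Q u v" unfolding Low_def by blast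
      then show "\<exists>u v. u < x \<and> x < v \<and> v - u < d \<and> Q u v" using n by (intro exI[of _ u] exI[of _ v]) auto
    qed
  qed
  have "(\<Inter>n\<in>UNIV. Low n) \<in> sets lebesgue"
    by (rule sets.countable_INT) (use op in auto)
  then show ?thesis unfolding eq by simp
qed

lemma lowq_sets: "{x. lowq G s x} \<in> sets lebesgue"
  unfolding lowq_def by (rule dini_set_sets)

lemma highq_sets: "{x. highq G r x} \<in> sets lebesgue"
  unfolding highq_def by (rule dini_set_sets)


lemma emeasure_le_of_negligible_diff:
  assumes "E \<in> sets lebesgue" "T \<in> sets lebesgue" "negligible (E - T)"
  shows "emeasure lebesgue E \<le> emeasure lebesgue T"
proof -
  have "emeasure lebesgue E \<le> emeasure lebesgue (T \<union> (E - T))"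
    by (rule emeasure_mono) (use assms in auto)
  also have "\<dots> = emeasure lebesgue T"
    by (rule emeasure_Un_null_set) (use assms in \<open>auto simp: negligible_iff_null_sets\<close>)
  finally show ?thesis .
qed

lemma bad_negligible:
  fixes G :: "real \<Rightarrow> real"
  assumes G: "mono G" "continuous_on UNIV G" and sr: "s < r"
  shows "negligible {x \<in> {0<..<1}. lowq G s x \<and> highq G r x}"
proof (cases "s \<le> 0")
  case True
  then have "{x \<in> {0<..<1}. lowq G s x \<and> highq G r x} = {}" using not_lowq_nonpos[OF G(1)] by blast
  then show ?thesis by (metis negligible_empty)
next
  case False
  then have s: "0 < s" by simp
  then have r: "0 < r" using sr by simp
  define E where "E = {x \<in> {0<..<1}. lowq G s x \<and> highq G r x}"
  have Esets: "E \<in> sets lebesgue"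
  proof -
    have "E = {0<..<1} \<inter> {x. lowq G s x} \<inter> {x. highq G r x}" unfolding E_def by auto
    moreover have "{0<..<1::real} \<in> sets lebesgue" by simp
    ultimately show ?thesis using lowq_sets[of G s] highq_sets[of G r] by (metis sets.Int)
  qed
  have Efin: "emeasure lebesgue E \<le> emeasure lebesgue {0..1::real}"
    by (rule emeasure_mono) (auto simp: E_def)
  then have "emeasure lebesgue E < \<infinity>" by (simp add: le_less_trans)
  then obtain m where m: "emeasure lebesgue E = ennreal m" "0 \<le> m"
    by (metis ennreal_cases less_irrefl infinity_ennreal_def)
  let ?mu = "interval_measure G"
  have s0: "0 \<le> s" and r0: "0 \<le> r" using s r by auto
  have lowE: "\<And>x. x \<in> E \<Longrightarrow> lowq G s x" unfolding E_def by blast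
  have highE: "\<And>x. x \<in> E \<inter> U2 \<Longrightarrow> highq G r x" for U2 unfolding E_def by blast
  have key: "r * m \<le> s * (m + e)" if e: "e > 0" for e
  proof -
    obtain U where U: "open U" "E \<subseteq> U" "(U - E) \<in> lmeasurable" "emeasure lebesgue (U - E) < ennreal e"
      using sets_lebesgue_outer_open[OF Esets e] by blast
    define U' where "U' = U \<inter> {0<..<1}"
    have U': "open U'" "E \<subseteq> U'" using U unfolding U'_def E_def by auto
    obtain C1 where C1: "countable C1" "\<And>i. i \<in> C1 \<Longrightarrow> fst i < snd i \<and> {fst i..snd i} \<subseteq> U'"
      "disjoint_family_on (\<lambda>i. {fst i..snd i}) C1" "negligible (E - (\<Union>i\<in>C1. {fst i..snd i}))"
      "emeasure ?mu (\<Union>i\<in>C1. {fst i<..snd i}) \<le> ennreal s * emeasure lebesgue (\<Union>i\<in>C1. {fst i..snd i})"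
      using low_cover[OF G U' s0 lowE] by blast
    define T1 where "T1 = (\<Union>i\<in>C1. {fst i..snd i})"
    define U2 where "U2 = (\<Union>i\<in>C1. {fst i<..<snd i})"
    have U2: "open U2" "E \<inter> U2 \<subseteq> U2" unfolding U2_def by auto
    obtain C2 where C2: "countable C2" "\<And>i. i \<in> C2 \<Longrightarrow> fst i < snd i \<and> {fst i..snd i} \<subseteq> U2"
      "disjoint_family_on (\<lambda>i. {fst i..snd i}) C2" "negligible ((E \<inter> U2) - (\<Union>i\<in>C2. {fst i..snd i}))"
      "ennreal r * emeasure lebesgue (\<Union>i\<in>C2. {fst i..snd i}) \<le> emeasure ?mu (\<Union>i\<in>C2. {fst i<..snd i})"
      using high_cover[OF G U2 r0 highE] by blast
    define T2 where "T2 = (\<Union>i\<in>C2. {fst i..snd i})"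
    have T1sets: "T1 \<in> sets lebesgue" unfolding T1_def using C1(1) by (intro sets.countable_UN'') auto
    have T2sets: "T2 \<in> sets lebesgue" unfolding T2_def using C2(1) by (intro sets.countable_UN'') auto
    have "T1 - U2 \<subseteq> fst ` C1 \<union> snd ` C1"
    proof
      fix y assume y: "y \<in> T1 - U2"
      then obtain i where i: "i \<in> C1" "fst i \<le> y" "y \<le> snd i" unfolding T1_def by auto
      have "\<not> (fst i < y \<and> y < snd i)" using y i(1) unfolding U2_def by auto
      then have "y = fst i \<or> y = snd i" using i by linarith
      then show "y \<in> fst ` C1 \<union> snd ` C1" using i(1) by blast
    qed
    moreover have "countable (fst ` C1 \<union> snd ` C1)" using C1(1) by simp
    ultimately have negTU: "negligible (T1 - U2)"
      by (meson countable_imp_null_set_lborel countable_subset negligible_iff_null_sets null_sets_completionI)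
    have "E - T2 \<subseteq> (E - T1) \<union> (T1 - U2) \<union> ((E \<inter> U2) - T2)" by blast
    moreover have "negligible ((E - T1) \<union> (T1 - U2) \<union> ((E \<inter> U2) - T2))"
      using C1(4)[folded T1_def] C2(4)[folded T2_def] negTU by (intro negligible_Un)
    ultimately have negE: "negligible (E - T2)" using negligible_subset by blast
    have "ennreal r * emeasure lebesgue E \<le> ennreal r * emeasure lebesgue T2"
      using emeasure_le_of_negligible_diff[OF Esets T2sets negE] by (rule mult_left_mono) simp
    also have "\<dots> \<le> emeasure ?mu (\<Union>i\<in>C2. {fst i<..snd i})" using C2(5) unfolding T2_def .
    also have "\<dots> \<le> emeasure ?mu (\<Union>i\<in>C1. {fst i<..snd i})"
    proof (rule emeasure_mono)
      show "(\<Union>i\<in>C2. {fst i<..snd i}) \<subseteq> (\<Union>i\<in>C1. {fst i<..snd i})"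
      proof
        fix y assume "y \<in> (\<Union>i\<in>C2. {fst i<..snd i})"
        then obtain i where i: "i \<in> C2" "y \<in> {fst i<..snd i}" by blast
        then have "y \<in> U2" using C2(2)[OF i(1)] by auto
        then show "y \<in> (\<Union>i\<in>C1. {fst i<..snd i})" unfolding U2_def by auto
      qed
      show "(\<Union>i\<in>C1. {fst i<..snd i}) \<in> sets ?mu" using C1(1) by (auto intro!: sets.countable_UN'')
    qed
    also have "\<dots> \<le> ennreal s * emeasure lebesgue T1" using C1(5) unfolding T1_def .
    also have "\<dots> \<le> ennreal s * emeasure lebesgue U"
    proof (rule mult_left_mono)
      show "emeasure lebesgue T1 \<le> emeasure lebesgue U"
        by (rule emeasure_mono) (use C1(2) U(1) in \<open>auto simp: T1_def U'_def\<close>)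
    qed simp
    also have "\<dots> \<le> ennreal s * (emeasure lebesgue E + emeasure lebesgue (U - E))"
    proof (rule mult_left_mono)
      have "emeasure lebesgue U = emeasure lebesgue (E \<union> (U - E))" using U(2) by (simp add: Un_absorb1)
      also have "\<dots> \<le> emeasure lebesgue E + emeasure lebesgue (U - E)"
        by (rule emeasure_subadditive) (use Esets U in auto)
      finally show "emeasure lebesgue U \<le> emeasure lebesgue E + emeasure lebesgue (U - E)" .
    qed simp
    also have "\<dots> \<le> ennreal s * (ennreal m + ennreal e)"
    proof (rule mult_left_mono)
      have "emeasure lebesgue (U - E) \<le> ennreal e" using U(4) by (rule less_imp_le)
      then show "emeasure lebesgue E + emeasure lebesgue (U - E) \<le> ennreal m + ennreal e"
        unfolding m(1) by (rule add_left_mono)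
    qed simp
    finally have ch: "ennreal r * emeasure lebesgue E \<le> ennreal s * (ennreal m + ennreal e)" .
    have e1: "ennreal r * emeasure lebesgue E = ennreal (r * m)" using m r by (simp add: ennreal_mult)
    have "ennreal m + ennreal e = ennreal (m + e)" using m e by (intro ennreal_plus[symmetric]) auto
    moreover have "ennreal s * ennreal (m + e) = ennreal (s * (m + e))" using m s e by (intro ennreal_mult[symmetric]) auto
    ultimately have e2: "ennreal s * (ennreal m + ennreal e) = ennreal (s * (m + e))" by simp
    have "ennreal (r * m) \<le> ennreal (s * (m + e))" using ch unfolding e1 e2 .
    moreover have "0 \<le> s * (m + e)" using s m e by simp
    ultimately show ?thesis using ennreal_le_iff by blast
  qed
  have "(r - s) * m \<le> 0"
  proof (rule field_le_epsilon)
    fix e :: real assume e: "e > 0"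
    have "r * m \<le> s * (m + e / s)" using key[of "e / s"] e s by simp
    then show "(r - s) * m \<le> 0 + e" using s by (simp add: algebra_simps)
  qed
  moreover have "0 \<le> (r - s) * m" using sr m(2) by simp
  ultimately have "(r - s) * m = 0" by linarith
  then have "m = 0" using sr by simp
  then have "emeasure lebesgue E = 0" using m by simp
  then show ?thesis using Esets negligible_iff_emeasure0 unfolding E_def by blast
qed


lemma inf_negligible:
  fixes G :: "real \<Rightarrow> real"
  assumes G: "mono G" "continuous_on UNIV G"
  shows "negligible {x \<in> {0<..<1}. \<forall>M::nat. highq G (real M) x}"
proof -
  define E where "E = {x \<in> {0<..<1}. \<forall>M::nat. highq G (real M) x}"
  have Esets: "E \<in> sets lebesgue"
  proof -
    have "E = {0<..<1} \<inter> (\<Inter>M\<in>UNIV. {x. highq G (real M) x})" unfolding E_def by auto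
    moreover have "(\<Inter>M\<in>(UNIV::nat set). {x. highq G (real M) x}) \<in> sets lebesgue"
      by (rule sets.countable_INT) (use highq_sets in auto)
    moreover have "{0<..<1::real} \<in> sets lebesgue" by simp
    ultimately show ?thesis by (metis sets.Int)
  qed
  have "emeasure lebesgue E \<le> emeasure lebesgue {0..1::real}"
    by (rule emeasure_mono) (auto simp: E_def)
  then have "emeasure lebesgue E < \<infinity>" by (simp add: le_less_trans)
  then obtain m where m: "emeasure lebesgue E = ennreal m" "0 \<le> m"
    by (metis ennreal_cases less_irrefl infinity_ennreal_def)
  let ?mu = "interval_measure G"
  have mo: "x \<le> y \<Longrightarrow> G x \<le> G y" for x y using G(1) by (simp add: monoD)
  have rc: "continuous (at_right a) G" for a
    using G(2) by (meson UNIV_I continuous_on_eq_continuous_within continuous_within_subset subset_UNIV)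
  have key: "real M * m \<le> G 1 - G 0" for M :: nat
  proof -
    have U: "open {0<..<1::real}" "E \<subseteq> {0<..<1}" unfolding E_def by auto
    have r0: "0 \<le> real M" by simp
    have hE: "\<And>x. x \<in> E \<Longrightarrow> highq G (real M) x" unfolding E_def by blast
    obtain C where C: "countable C" "\<And>i. i \<in> C \<Longrightarrow> fst i < snd i \<and> {fst i..snd i} \<subseteq> {0<..<1}"
      "disjoint_family_on (\<lambda>i. {fst i..snd i}) C" "negligible (E - (\<Union>i\<in>C. {fst i..snd i}))"
      "ennreal (real M) * emeasure lebesgue (\<Union>i\<in>C. {fst i..snd i}) \<le> emeasure ?mu (\<Union>i\<in>C. {fst i<..snd i})"
      using high_cover[OF G U r0 hE] by blast
    define T where "T = (\<Union>i\<in>C. {fst i..snd i})"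
    have Tsets: "T \<in> sets lebesgue" unfolding T_def using C(1) by (intro sets.countable_UN'') auto
    have "ennreal (real M) * emeasure lebesgue E \<le> ennreal (real M) * emeasure lebesgue T"
      using emeasure_le_of_negligible_diff[OF Esets Tsets C(4)[folded T_def]] by (rule mult_left_mono) simp
    also have "\<dots> \<le> emeasure ?mu (\<Union>i\<in>C. {fst i<..snd i})" using C(5) unfolding T_def .
    also have "\<dots> \<le> emeasure ?mu {0<..1}"
    proof (rule emeasure_mono)
      show "(\<Union>i\<in>C. {fst i<..snd i}) \<subseteq> {0<..1}"
      proof
        fix y assume "y \<in> (\<Union>i\<in>C. {fst i<..snd i})"
        then obtain i where i: "i \<in> C" "fst i < y" "y \<le> snd i" by auto
        have "fst i \<in> {fst i..snd i}" "snd i \<in> {fst i..snd i}" using C(2)[OF i(1)] by auto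
        then have "fst i \<in> {0<..<1}" "snd i \<in> {0<..<1}" using C(2)[OF i(1)] by blast+
        then show "y \<in> {0<..1}" using i by auto
      qed
    qed simp
    also have "\<dots> = ennreal (G 1 - G 0)" by (simp add: emeasure_interval_measure_Ioc mo rc)
    finally have ch: "ennreal (real M) * emeasure lebesgue E \<le> ennreal (G 1 - G 0)" .
    have "ennreal (real M) * emeasure lebesgue E = ennreal (real M * m)" using m by (simp add: ennreal_mult)
    with ch have "ennreal (real M * m) \<le> ennreal (G 1 - G 0)" by simp
    moreover have "0 \<le> G 1 - G 0" using mo[of 0 1] by simp
    ultimately show ?thesis using ennreal_le_iff by blast
  qed
  have "m = 0"
  proof (rule ccontr)
    assume "m \<noteq> 0"
    then have mp: "m > 0" using m by simp
    obtain M :: nat where M: "(G 1 - G 0) / m < real M" using reals_Archimedean2 by blast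
    then have "G 1 - G 0 < real M * m" using mp by (simp add: field_simps)
    then show False using key[of M] by simp
  qed
  then have "emeasure lebesgue E = 0" using m by simp
  then show ?thesis using Esets negligible_iff_emeasure0 unfolding E_def by blast
qed

lemma mono_ae_diff:
  fixes G :: "real \<Rightarrow> real"
  assumes G: "mono G" "continuous_on UNIV G"
  shows "negligible {x \<in> {0<..<1}. \<not> (\<exists>L. (G has_real_derivative L) (at x))}"
proof -
  define I :: "(real \<times> real) set" where "I = {p \<in> \<rat> \<times> \<rat>. fst p < snd p}"
  define B where "B p = {x \<in> {0<..<1}. lowq G (fst p) x \<and> highq G (snd p) x}" for p
  have cI: "countable I" unfolding I_def
    by (rule countable_subset[of _ "\<rat> \<times> \<rat>"]) (auto simp: countable_rat)
  have nB: "negligible (\<Union>(B ` I))"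
  proof (rule negligible_countable_Union)
    show "countable (B ` I)" using cI by simp
    fix S assume "S \<in> B ` I"
    then obtain p where p: "p \<in> I" "S = B p" by blast
    then show "negligible S" unfolding B_def I_def using bad_negligible[OF G, of "fst p" "snd p"] by auto
  qed
  have nI: "negligible {x \<in> {0<..<1}. \<forall>M::nat. highq G (real M) x}" by (rule inf_negligible[OF G])
  have "{x \<in> {0<..<1}. \<not> (\<exists>L. (G has_real_derivative L) (at x))} \<subseteq>
        \<Union>(B ` I) \<union> {x \<in> {0<..<1}. \<forall>M::nat. highq G (real M) x}"
  proof
    fix x assume x: "x \<in> {x \<in> {0<..<1}. \<not> (\<exists>L. (G has_real_derivative L) (at x))}"
    then have "(\<exists>s\<in>\<rat>. \<exists>r\<in>\<rat>. s < r \<and> lowq G s x \<and> highq G r x) \<or> (\<forall>M::nat. highq G (real M) x)"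
      using nondiff_cases[OF G] by blast
    then show "x \<in> \<Union>(B ` I) \<union> {x \<in> {0<..<1}. \<forall>M::nat. highq G (real M) x}"
    proof
      assume "\<exists>s\<in>\<rat>. \<exists>r\<in>\<rat>. s < r \<and> lowq G s x \<and> highq G r x"
      then obtain s r where sr: "s \<in> \<rat>" "r \<in> \<rat>" "s < r" "lowq G s x" "highq G r x" by blast
      then have "(s, r) \<in> I" "x \<in> B (s, r)" using x unfolding I_def B_def by auto
      then show ?thesis by blast
    qed (use x in auto)
  qed
  moreover have "negligible (\<Union>(B ` I) \<union> {x \<in> {0<..<1}. \<forall>M::nat. highq G (real M) x})"
    using nB nI by (rule negligible_Un)
  ultimately show ?thesis using negligible_subset by blast
qed


definition clamp01 :: "real \<Rightarrow> real" where "clamp01 x = max 0 (min 1 x)"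

lemma clamp01_props: "0 \<le> clamp01 x" "clamp01 x \<le> 1" "x \<le> y \<Longrightarrow> clamp01 x \<le> clamp01 y"
  "x \<in> {0..1} \<Longrightarrow> clamp01 x = x" "continuous_on UNIV clamp01"
  unfolding clamp01_def by (auto intro!: continuous_intros)

lemma ac_ae_diff:
  assumes ac: "abs_cont_01 f"
  shows "negligible {x \<in> {0..1}. \<not> (\<exists>L. (f has_real_derivative L) (at x))}"
proof -
  define G1 where "G1 x = Vf f (clamp01 x)" for x
  define G2 where "G2 x = Vf f (clamp01 x) - f (clamp01 x)" for x
  have m1: "mono G1" unfolding G1_def
    by (rule monoI) (use clamp01_props in \<open>auto intro!: Vf_mono[OF ac]\<close>)
  have m2: "mono G2"
  proof (rule monoI)
    fix x y :: real assume "x \<le> y"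
    then have "Vf f (clamp01 x) + \<bar>f (clamp01 y) - f (clamp01 x)\<bar> \<le> Vf f (clamp01 y)"
      using clamp01_props by (intro Vf_step[OF ac]) auto
    then show "G2 x \<le> G2 y" unfolding G2_def by linarith
  qed
  have cV: "continuous_on UNIV (\<lambda>x. Vf f (clamp01 x))"
    by (rule continuous_on_compose2[OF Vf_cont[OF ac] clamp01_props(5)]) (use clamp01_props in auto)
  have cf: "continuous_on UNIV (\<lambda>x. f (clamp01 x))"
    by (rule continuous_on_compose2[OF ac_cont[OF ac] clamp01_props(5)]) (use clamp01_props in auto)
  have c1: "continuous_on UNIV G1" unfolding G1_def by (rule cV)
  have c2: "continuous_on UNIV G2" unfolding G2_def by (intro continuous_on_diff cV cf)
  have n1: "negligible {x \<in> {0<..<1}. \<not> (\<exists>L. (G1 has_real_derivative L) (at x))}" by (rule mono_ae_diff[OF m1 c1])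
  have n2: "negligible {x \<in> {0<..<1}. \<not> (\<exists>L. (G2 has_real_derivative L) (at x))}" by (rule mono_ae_diff[OF m2 c2])
  have "{x \<in> {0..1}. \<not> (\<exists>L. (f has_real_derivative L) (at x))} \<subseteq>
      {0, 1} \<union> {x \<in> {0<..<1}. \<not> (\<exists>L. (G1 has_real_derivative L) (at x))} \<union> {x \<in> {0<..<1}. \<not> (\<exists>L. (G2 has_real_derivative L) (at x))}"
  proof
    fix x assume x: "x \<in> {x \<in> {0..1}. \<not> (\<exists>L. (f has_real_derivative L) (at x))}"
    show "x \<in> {0, 1} \<union> {x \<in> {0<..<1}. \<not> (\<exists>L. (G1 has_real_derivative L) (at x))} \<union> {x \<in> {0<..<1}. \<not> (\<exists>L. (G2 has_real_derivative L) (at x))}"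
    proof (rule ccontr)
      assume "\<not> ?thesis"
      then have x01: "x \<in> {0<..<1}" and "\<exists>L. (G1 has_real_derivative L) (at x)" "\<exists>L. (G2 has_real_derivative L) (at x)"
        using x by auto
      then obtain L1 L2 where L: "(G1 has_real_derivative L1) (at x)" "(G2 has_real_derivative L2) (at x)" by blast
      have D: "((\<lambda>y. G1 y - G2 y) has_real_derivative L1 - L2) (at x)" by (rule DERIV_diff[OF L])
      have eq: "\<And>y. y \<in> {0<..<1} \<Longrightarrow> G1 y - G2 y = f y"
        unfolding G1_def G2_def using clamp01_props(4) by auto
      have "(f has_real_derivative L1 - L2) (at x)"
        using has_field_derivative_transform_within_open[OF D open_greaterThanLessThan x01 eq] .
      then show False using x by blast
    qed
  qed
  moreover have "negligible ({0, 1} \<union> {x \<in> {0<..<1}. \<not> (\<exists>L. (G1 has_real_derivative L) (at x))} \<union> {x \<in> {0<..<1}. \<not> (\<exists>L. (G2 has_real_derivative L) (at x))})"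
    using n1 n2 by (intro negligible_Un) auto
  ultimately show ?thesis using negligible_subset by blast
qed

lemma deriv_approx:
  assumes "(f has_real_derivative D) (at x)" "e > 0"
  obtains d where "d > 0" "\<And>y. \<bar>y - x\<bar> < d \<Longrightarrow> \<bar>f y - f x - D * (y - x)\<bar> \<le> e * \<bar>y - x\<bar>"
proof -
  have "((\<lambda>y. (f y - f x) / (y - x)) \<longlongrightarrow> D) (at x)"
    using assms(1) by (simp add: has_field_derivative_iff)
  then obtain s where s: "s > 0" "\<And>y. y \<noteq> x \<and> norm (y - x) < s \<Longrightarrow> norm ((f y - f x) / (y - x) - D) < e"
    using assms(2) unfolding LIM_eq by blast
  show ?thesis
  proof (rule that[OF s(1)])
    fix y assume y: "\<bar>y - x\<bar> < s"
    show "\<bar>f y - f x - D * (y - x)\<bar> \<le> e * \<bar>y - x\<bar>"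
    proof (cases "y = x")
      case False
      then have nz: "y - x \<noteq> 0" by simp
      have "\<bar>(f y - f x) / (y - x) - D\<bar> < e" using s(2)[of y] False y by simp
      moreover have "(f y - f x) / (y - x) - D = (f y - f x - D * (y - x)) / (y - x)"
        using nz by (simp add: field_simps)
      ultimately have "\<bar>f y - f x - D * (y - x)\<bar> / \<bar>y - x\<bar> < e" by (simp add: abs_divide)
      then show ?thesis using nz by (simp add: divide_less_eq less_imp_le)
    qed simp
  qed
qed

lemma sum_len_le_measure:
  assumes "finite I" "\<And>i. i \<in> I \<Longrightarrow> a i \<le> b i \<and> {a i<..<b i} \<subseteq> T" "T \<in> lmeasurable"
    and "\<And>i j. i \<in> I \<Longrightarrow> j \<in> I \<Longrightarrow> i \<noteq> j \<Longrightarrow> b i \<le> a j \<or> b j \<le> a i"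
  shows "(\<Sum>i\<in>I. b i - a i) \<le> measure lebesgue (T::real set)"
proof -
  have "(\<Sum>i\<in>I. b i - a i) = (\<Sum>i\<in>I. measure lebesgue {a i<..<b i})"
    using assms(2) by (intro sum.cong) auto
  also have "\<dots> = measure lebesgue (\<Union>i\<in>I. {a i<..<b i})"
  proof (rule measure_finite_Union[symmetric])
    show "disjoint_family_on (\<lambda>i. {a i<..<b i}) I"
      unfolding disjoint_family_on_def
    proof (intro ballI impI)
      fix i j assume "i \<in> I" "j \<in> I" "i \<noteq> j"
      then have "b i \<le> a j \<or> b j \<le> a i" using assms(4) by auto
      then show "{a i<..<b i} \<inter> {a j<..<b j} = {}" by auto
    qed
  qed (use assms in auto)
  also have "\<dots> \<le> measure lebesgue T"
    by (rule measure_mono_fmeasurable) (use assms in auto)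
  finally show ?thesis .
qed


lemma tagged_elem:
  assumes "p tagged_division_of {0..1::real}" "i \<in> p"
  shows "snd i = {Inf (snd i)..Sup (snd i)}" "Inf (snd i) \<le> fst i" "fst i \<le> Sup (snd i)"
    "0 \<le> Inf (snd i)" "Sup (snd i) \<le> 1" "Henstock_Kurzweil_Integration.content (snd i) = Sup (snd i) - Inf (snd i)"
proof -
  obtain x K where i: "i = (x, K)" by (cases i)
  have xK: "x \<in> K" "K \<subseteq> {0..1}" using tagged_division_ofD(2,3)[OF assms(1)] assms(2) i by auto
  obtain a b where K: "K = cbox a b" using tagged_division_ofD(4)[OF assms(1)] assms(2) i by blast
  then have Kab: "K = {a..b}" by simp
  then have ab: "a \<le> b" using xK by auto
  have IS: "Inf K = a" "Sup K = b" using ab Kab by auto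
  show "snd i = {Inf (snd i)..Sup (snd i)}" using Kab IS i by simp
  show "Inf (snd i) \<le> fst i" "fst i \<le> Sup (snd i)" using IS xK Kab i by auto
  show "0 \<le> Inf (snd i)" "Sup (snd i) \<le> 1" using IS xK Kab i ab by auto
  show "Henstock_Kurzweil_Integration.content (snd i) = Sup (snd i) - Inf (snd i)" using IS Kab i ab by simp
qed

lemma ftc_ac:
  fixes f f' :: "real \<Rightarrow> real"
  assumes ac: "abs_cont_01 f" and N: "negligible N"
    and ND: "\<And>x. x \<in> {0..1} \<Longrightarrow> x \<notin> N \<Longrightarrow> (f has_real_derivative f' x) (at x)"
  shows "((\<lambda>x. if x \<in> N then 0 else f' x) has_integral (f 1 - f 0)) {0..1}"
  unfolding has_integral_real
proof (intro allI impI)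
  fix e :: real assume e: "e > 0"
  define g where "g x = (if x \<in> N then 0 else f' x)" for x
  define eps where "eps = e / 3"
  have eps: "eps > 0" using e by (simp add: eps_def)
  obtain del where del: "del > 0" and acd: "\<And>(I::(real \<times> real set) set) a b. finite I \<Longrightarrow> (\<forall>i\<in>I. 0 \<le> a i \<and> a i \<le> b i \<and> b i \<le> 1) \<Longrightarrow>
     (\<forall>i\<in>I. \<forall>j\<in>I. i \<noteq> j \<longrightarrow> b i \<le> a j \<or> b j \<le> a i) \<Longrightarrow>
     (\<Sum>i\<in>I. b i - a i) < del \<Longrightarrow> (\<Sum>i\<in>I. \<bar>f (b i) - f (a i)\<bar>) < eps"
    by (rule acF[OF ac eps]) (rule that)
  obtain T where T: "open T" "N \<subseteq> T" "T \<in> lmeasurable" "measure lebesgue T < del"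
  proof -
    have Ns: "N \<in> sets lebesgue" using N by (rule negligible_imp_sets)
    obtain T where T: "open T" "N \<subseteq> T" "(T - N) \<in> lmeasurable" "emeasure lebesgue (T - N) < ennreal del"
      using sets_lebesgue_outer_open[OF Ns del] by blast
    have TT: "T = (T - N) \<union> N" using T(2) by blast
    have Tm: "T \<in> lmeasurable" by (subst TT) (rule fmeasurable.Un[OF T(3) negligible_imp_measurable[OF N]])
    have "measure lebesgue T = measure lebesgue (T - N)"
      using T(3) N by (subst TT) (intro measure_Un_null_set, auto simp: negligible_iff_null_sets)
    moreover have "measure lebesgue (T - N) < del"
    proof -
      have "emeasure lebesgue (T - N) = ennreal (measure lebesgue (T - N))"
        using T(3) by (simp add: emeasure_eq_measure2)
      then show ?thesis using T(4) del by (simp add: ennreal_less_iff)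
    qed
    ultimately show thesis using that T(1,2) Tm by simp
  qed
  have "\<forall>x\<in>{0..1} - N. \<exists>d>0. \<forall>y. \<bar>y - x\<bar> < d \<longrightarrow> \<bar>f y - f x - f' x * (y - x)\<bar> \<le> eps * \<bar>y - x\<bar>"
  proof
    fix x assume "x \<in> {0..1} - N"
    then have D: "(f has_real_derivative f' x) (at x)" using ND by auto
    obtain d where "d > 0" "\<And>y. \<bar>y - x\<bar> < d \<Longrightarrow> \<bar>f y - f x - f' x * (y - x)\<bar> \<le> eps * \<bar>y - x\<bar>"
      by (rule deriv_approx[OF D eps]) (rule that)
    then show "\<exists>d>0. \<forall>y. \<bar>y - x\<bar> < d \<longrightarrow> \<bar>f y - f x - f' x * (y - x)\<bar> \<le> eps * \<bar>y - x\<bar>"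
      by blast
  qed
  then obtain eta where eta: "\<forall>x\<in>{0..1} - N. eta x > 0 \<and> (\<forall>y. \<bar>y - x\<bar> < eta x \<longrightarrow> \<bar>f y - f x - f' x * (y - x)\<bar> \<le> eps * \<bar>y - x\<bar>)"
    by (rule bchoice[THEN exE])
  have "\<forall>x\<in>N. \<exists>r>0. ball x r \<subseteq> T" using T(1,2) open_contains_ball by blast
  then obtain rho where rho: "\<forall>x\<in>N. rho x > 0 \<and> ball x (rho x) \<subseteq> T" by (rule bchoice[THEN exE])
  define rad where "rad x = (if x \<in> N then rho x else if x \<in> {0..1} then eta x else 1)" for x
  have radpos: "rad x > 0" for x
  proof (cases "x \<in> N")
    case True
    then show ?thesis using rho unfolding rad_def by simp
  next
    case False
    then show ?thesis using eta unfolding rad_def by (cases "x \<in> {0..1}") auto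
  qed
  define gam where "gam x = ball x (rad x)" for x
  have G: "gauge gam"
    unfolding gauge_def gam_def using radpos by simp
  have B: "norm ((\<Sum>(x,K)\<in>p. Henstock_Kurzweil_Integration.content K *\<^sub>R g x) - (f 1 - f 0)) < e"
    if p: "p tagged_division_of {0..1}" "gam fine p" for p
  proof -
    define lo where "lo i = Inf (snd i)" for i :: "real \<times> real set"
    define hi where "hi i = Sup (snd i)" for i :: "real \<times> real set"
    have fin: "finite p" using p(1) by blast
    note te = tagged_elem[OF p(1), folded lo_def hi_def]
    have sub: "snd i \<subseteq> gam (fst i)" if "i \<in> p" for i
    proof -
      obtain x K where i: "i = (x, K)" by (cases i)
      have "\<forall>(x,K)\<in>p. K \<subseteq> gam x" using p(2) unfolding fine_def .
      then have "K \<subseteq> gam x" using that i by blast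
      then show ?thesis using i by simp
    qed
    define h where "h i = Henstock_Kurzweil_Integration.content (snd i) * g (fst i) - (f (hi i) - f (lo i))" for i
    have "(\<Sum>(x,K)\<in>p. Henstock_Kurzweil_Integration.content K *\<^sub>R g x) - (f 1 - f 0) = (\<Sum>i\<in>p. Henstock_Kurzweil_Integration.content (snd i) * g (fst i)) - (\<Sum>i\<in>p. f (hi i) - f (lo i))"
    proof -
      have "(\<Sum>i\<in>p. f (hi i) - f (lo i)) = (\<Sum>(x,K)\<in>p. f (Sup K) - f (Inf K))"
        unfolding hi_def lo_def by (simp add: split_def)
      also have "\<dots> = f 1 - f 0" using additive_tagged_division_1[OF _ p(1), of f] by simp
      finally show ?thesis by (simp add: split_def)
    qed
    also have "\<dots> = (\<Sum>i\<in>p. h i)" unfolding h_def by (simp add: sum_subtractf)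
    also have "\<dots> = (\<Sum>i\<in>p \<inter> {i. fst i \<notin> N}. h i) + (\<Sum>i\<in>p - {i. fst i \<notin> N}. h i)"
      using fin by (rule sum.Int_Diff)
    finally have split: "(\<Sum>(x,K)\<in>p. Henstock_Kurzweil_Integration.content K *\<^sub>R g x) - (f 1 - f 0) =
       (\<Sum>i\<in>p \<inter> {i. fst i \<notin> N}. h i) + (\<Sum>i\<in>p - {i. fst i \<notin> N}. h i)" .
    have b1: "\<bar>\<Sum>i\<in>p \<inter> {i. fst i \<notin> N}. h i\<bar> \<le> eps"
    proof -
      have "\<bar>h i\<bar> \<le> eps * Henstock_Kurzweil_Integration.content (snd i)" if i: "i \<in> p \<inter> {i. fst i \<notin> N}" for i
      proof -
        have ip: "i \<in> p" and xN: "fst i \<notin> N" using i by auto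
        have x01: "fst i \<in> {0..1}" using te(2-5)[OF ip] by auto
        have sg: "snd i \<subseteq> ball (fst i) (eta (fst i))" using sub[OF ip] xN x01 unfolding gam_def rad_def by simp
        have lh: "lo i \<le> hi i" using te(2,3)[OF ip] by linarith
        have "lo i \<in> snd i" "hi i \<in> snd i" using lh by (subst te(1)[OF ip], simp)+
        then have "lo i \<in> ball (fst i) (eta (fst i))" "hi i \<in> ball (fst i) (eta (fst i))" using sg by auto
        then have d: "\<bar>lo i - fst i\<bar> < eta (fst i)" "\<bar>hi i - fst i\<bar> < eta (fst i)"
          by (auto simp: dist_real_def abs_minus_commute)
        have E: "\<forall>y. \<bar>y - fst i\<bar> < eta (fst i) \<longrightarrow> \<bar>f y - f (fst i) - f' (fst i) * (y - fst i)\<bar> \<le> eps * \<bar>y - fst i\<bar>"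
          using eta x01 xN by blast
        have e1': "\<bar>f (hi i) - f (fst i) - f' (fst i) * (hi i - fst i)\<bar> \<le> eps * \<bar>hi i - fst i\<bar>"
          using E d(2) by blast
        have e2': "\<bar>f (lo i) - f (fst i) - f' (fst i) * (lo i - fst i)\<bar> \<le> eps * \<bar>lo i - fst i\<bar>"
          using E d(1) by blast
        have a1: "\<bar>hi i - fst i\<bar> = hi i - fst i" using te(3)[OF ip] by simp
        have a2: "\<bar>lo i - fst i\<bar> = fst i - lo i" using te(2)[OF ip] by simp
        have "h i = (f (lo i) - f (fst i) - f' (fst i) * (lo i - fst i)) - (f (hi i) - f (fst i) - f' (fst i) * (hi i - fst i))"
          unfolding h_def g_def te(6)[OF ip] using xN by (simp add: algebra_simps)
        then have "\<bar>h i\<bar> \<le> \<bar>f (lo i) - f (fst i) - f' (fst i) * (lo i - fst i)\<bar> + \<bar>f (hi i) - f (fst i) - f' (fst i) * (hi i - fst i)\<bar>"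
          by (metis abs_triangle_ineq4)
        also have "\<dots> \<le> eps * (fst i - lo i) + eps * (hi i - fst i)"
          using e1' e2' unfolding a1 a2 by (rule add_mono[rotated])
        also have "\<dots> = eps * Henstock_Kurzweil_Integration.content (snd i)" unfolding te(6)[OF ip] by (simp add: algebra_simps)
        finally show ?thesis .
      qed
      then have "\<bar>\<Sum>i\<in>p \<inter> {i. fst i \<notin> N}. h i\<bar> \<le> (\<Sum>i\<in>p \<inter> {i. fst i \<notin> N}. eps * Henstock_Kurzweil_Integration.content (snd i))"
        by (intro order.trans[OF sum_abs] sum_mono) auto
      also have "\<dots> \<le> (\<Sum>i\<in>p. eps * Henstock_Kurzweil_Integration.content (snd i))"
        using fin eps by (intro sum_mono2) auto
      also have "\<dots> = eps * (\<Sum>(x,K)\<in>p. Henstock_Kurzweil_Integration.content K)" by (simp add: sum_distrib_left split_def)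
      also have "\<dots> = eps" using additive_content_tagged_division[of p 0 1] p(1) by simp
      finally show ?thesis .
    qed
    have b2: "\<bar>\<Sum>i\<in>p - {i. fst i \<notin> N}. h i\<bar> < eps"
    proof -
      define Q where "Q = {i \<in> p - {i. fst i \<notin> N}. lo i < hi i}"
      have "(\<Sum>i\<in>p - {i. fst i \<notin> N}. h i) = (\<Sum>i\<in>p - {i. fst i \<notin> N}. - (f (hi i) - f (lo i)))"
        unfolding h_def g_def by (intro sum.cong) auto
      also have "\<dots> = (\<Sum>i\<in>Q. - (f (hi i) - f (lo i)))"
      proof (rule sum.mono_neutral_right)
        show "\<forall>i\<in>p - {i. fst i \<notin> N} - Q. - (f (hi i) - f (lo i)) = 0"
        proof
          fix i assume "i \<in> p - {i. fst i \<notin> N} - Q"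
          then have ip: "i \<in> p" and "\<not> lo i < hi i" unfolding Q_def by auto
          moreover have "lo i \<le> hi i" using te(2,3)[OF ip] by linarith
          ultimately have "lo i = hi i" by linarith
          then show "- (f (hi i) - f (lo i)) = 0" by simp
        qed
      qed (use fin in \<open>auto simp: Q_def\<close>)
      finally have eq: "(\<Sum>i\<in>p - {i. fst i \<notin> N}. h i) = (\<Sum>i\<in>Q. - (f (hi i) - f (lo i)))" .
      have Qp: "Q \<subseteq> p" unfolding Q_def by auto
      have finQ: "finite Q" using fin Qp finite_subset by blast
      have no: "hi i \<le> lo j \<or> hi j \<le> lo i" if ij: "i \<in> Q" "j \<in> Q" "i \<noteq> j" for i j
      proof (rule ccontr)
        assume c: "\<not> (hi i \<le> lo j \<or> hi j \<le> lo i)"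
        have ip: "i \<in> p" "j \<in> p" using ij Qp by auto
        have "interior (snd i) \<inter> interior (snd j) = {}"
          using tagged_division_ofD(5)[OF p(1), of "fst i" "snd i" "fst j" "snd j"] ip ij by auto
        then have "{lo i<..<hi i} \<inter> {lo j<..<hi j} = {}"
          using te(1)[OF ip(1)] te(1)[OF ip(2)] by (metis interior_atLeastAtMost_real)
        moreover have "lo i < hi i" "lo j < hi j" using ij unfolding Q_def by auto
        then have "(max (lo i) (lo j) + min (hi i) (hi j)) / 2 \<in> {lo i<..<hi i} \<inter> {lo j<..<hi j}"
          using c by auto
        ultimately show False by blast
      qed
      have len: "(\<Sum>i\<in>Q. hi i - lo i) \<le> measure lebesgue T"
      proof (rule sum_len_le_measure[OF finQ _ T(3) no])
        fix i assume i: "i \<in> Q"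
        then have ip: "i \<in> p" and xN: "fst i \<in> N" using Qp unfolding Q_def by auto
        have "snd i \<subseteq> ball (fst i) (rho (fst i))" using sub[OF ip] xN unfolding gam_def rad_def by simp
        then have "snd i \<subseteq> T" using rho xN by blast
        moreover have "{lo i<..<hi i} \<subseteq> snd i" using te(1)[OF ip] by (metis greaterThanLessThan_subseteq_atLeastAtMost_iff order_refl)
        ultimately show "lo i \<le> hi i \<and> {lo i<..<hi i} \<subseteq> T" using i unfolding Q_def by auto
      qed
      have "(\<Sum>i\<in>Q. \<bar>f (hi i) - f (lo i)\<bar>) < eps"
      proof (rule acd[OF finQ])
        show "\<forall>i\<in>Q. 0 \<le> lo i \<and> lo i \<le> hi i \<and> hi i \<le> 1" using te(4,5) Qp unfolding Q_def by auto
        show "\<forall>i\<in>Q. \<forall>j\<in>Q. i \<noteq> j \<longrightarrow> hi i \<le> lo j \<or> hi j \<le> lo i" using no by blast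
        show "(\<Sum>i\<in>Q. hi i - lo i) < del" using len T(4) by linarith
      qed
      moreover have "\<bar>\<Sum>i\<in>Q. - (f (hi i) - f (lo i))\<bar> \<le> (\<Sum>i\<in>Q. \<bar>f (hi i) - f (lo i)\<bar>)"
        by (rule order.trans[OF sum_abs]) (simp add: abs_minus_commute)
      ultimately show ?thesis using eq by linarith
    qed
    have "\<bar>(\<Sum>(x,K)\<in>p. Henstock_Kurzweil_Integration.content K *\<^sub>R g x) - (f 1 - f 0)\<bar> < e"
      using split b1 b2 eps_def e by linarith
    then show ?thesis by simp
  qed
  show "\<exists>\<gamma>. gauge \<gamma> \<and> (\<forall>\<D>. \<D> tagged_division_of {0..1} \<and> \<gamma> fine \<D> \<longrightarrow>
        norm ((\<Sum>(x,k)\<in>\<D>. Henstock_Kurzweil_Integration.content k *\<^sub>R (if x \<in> N then 0 else f' x)) - (f 1 - f 0)) < e)"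
  proof (intro exI[of _ gam] conjI allI impI)
    fix D assume "D tagged_division_of {0..1} \<and> gam fine D"
    then show "norm ((\<Sum>(x,k)\<in>D. Henstock_Kurzweil_Integration.content k *\<^sub>R (if x \<in> N then 0 else f' x)) - (f 1 - f 0)) < e"
      using B[of D] unfolding g_def by blast
  qed (rule G)
qed


lemma ac_linear:
  assumes "abs_cont_01 f"
  shows "abs_cont_01 (\<lambda>u. f u - u * c)"
  unfolding abs_cont_01_def
proof (intro allI impI)
  fix e :: real assume e: "e > 0"
  obtain d where d: "d > 0" "\<And>n a b. famI 0 1 n a b \<Longrightarrow> (\<Sum>i<n. b i - a i) < d \<Longrightarrow> famsum f n a b < e/2"
    using acD[OF assms, of "e/2"] e by auto
  define d' where "d' = min d (e / (2 * (\<bar>c\<bar> + 1)))"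
  have d': "d' > 0" using d e unfolding d'_def by simp
  show "\<exists>\<delta>>0. \<forall>(n::nat) (a::nat \<Rightarrow> real) (b::nat \<Rightarrow> real).
        (\<forall>i<n. 0 \<le> a i \<and> a i \<le> b i \<and> b i \<le> 1) \<longrightarrow>
        (\<forall>i<n. \<forall>j<n. i \<noteq> j \<longrightarrow> b i \<le> a j \<or> b j \<le> a i) \<longrightarrow>
        (\<Sum>i<n. b i - a i) < \<delta> \<longrightarrow>
        (\<Sum>i<n. \<bar>(f (b i) - b i * c) - (f (a i) - a i * c)\<bar>) < e"
  proof (intro exI[of _ d'] conjI allI impI)
    fix n :: nat and a b :: "nat \<Rightarrow> real"
    assume h1: "\<forall>i<n. 0 \<le> a i \<and> a i \<le> b i \<and> b i \<le> 1"
      and h2: "\<forall>i<n. \<forall>j<n. i \<noteq> j \<longrightarrow> b i \<le> a j \<or> b j \<le> a i"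
      and h3: "(\<Sum>i<n. b i - a i) < d'"
    have fam: "famI 0 1 n a b" using h1 h2 unfolding famI_def by blast
    have s1: "famsum f n a b < e/2" using d(2)[OF fam] h3 unfolding d'_def by simp
    have "(\<Sum>i<n. \<bar>(f (b i) - b i * c) - (f (a i) - a i * c)\<bar>) \<le> (\<Sum>i<n. \<bar>f (b i) - f (a i)\<bar> + \<bar>c\<bar> * (b i - a i))"
    proof (rule sum_mono)
      fix i assume "i \<in> {..<n}"
      then have "a i \<le> b i" using h1 by auto
      then have "\<bar>(b i - a i) * c\<bar> = \<bar>c\<bar> * (b i - a i)" by (simp add: abs_mult)
      moreover have "(f (b i) - b i * c) - (f (a i) - a i * c) = (f (b i) - f (a i)) - (b i - a i) * c"
        by (simp add: algebra_simps)
      ultimately show "\<bar>(f (b i) - b i * c) - (f (a i) - a i * c)\<bar> \<le> \<bar>f (b i) - f (a i)\<bar> + \<bar>c\<bar> * (b i - a i)"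
        by (metis abs_triangle_ineq4)
    qed
    also have "\<dots> = famsum f n a b + \<bar>c\<bar> * (\<Sum>i<n. b i - a i)"
      unfolding famsum_def by (simp add: sum.distrib sum_distrib_left)
    also have "\<bar>c\<bar> * (\<Sum>i<n. b i - a i) \<le> \<bar>c\<bar> * (e / (2 * (\<bar>c\<bar> + 1)))"
      using h3 unfolding d'_def by (intro mult_left_mono) auto
    then have "famsum f n a b + \<bar>c\<bar> * (\<Sum>i<n. b i - a i) < e/2 + \<bar>c\<bar> * (e / (2 * (\<bar>c\<bar> + 1)))"
      using s1 by linarith
    also have "\<bar>c\<bar> * (e / (2 * (\<bar>c\<bar> + 1))) \<le> e / 2"
    proof -
      have "\<bar>c\<bar> * (e / (2 * (\<bar>c\<bar> + 1))) = (e/2) * (\<bar>c\<bar> / (\<bar>c\<bar> + 1))" by (simp add: field_simps)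
      also have "\<dots> \<le> (e/2) * 1" using e by (intro mult_left_mono) auto
      finally show ?thesis by simp
    qed
    then have "e/2 + \<bar>c\<bar> * (e / (2 * (\<bar>c\<bar> + 1))) \<le> e" by linarith
    finally show "(\<Sum>i<n. \<bar>(f (b i) - b i * c) - (f (a i) - a i * c)\<bar>) < e" by simp
  qed (rule d')
qed

lemma Inf_shift:
  fixes S :: "real set"
  assumes "S \<noteq> {}" "bdd_below S"
  shows "Inf ((\<lambda>t. t - d) ` S) = Inf S - d"
proof (rule antisym)
  have ne: "(\<lambda>t. t - d) ` S \<noteq> {}" using assms by simp
  have bb: "bdd_below ((\<lambda>t. t - d) ` S)"
  proof -
    obtain m where "\<And>s. s \<in> S \<Longrightarrow> m \<le> s" using assms(2) unfolding bdd_below_def by blast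
    then show ?thesis by (intro bdd_belowI[of _ "m - d"]) auto
  qed
  show "Inf S - d \<le> Inf ((\<lambda>t. t - d) ` S)"
    by (rule cInf_greatest[OF ne]) (use cInf_lower[OF _ assms(2)] in auto)
  have "Inf ((\<lambda>t. t - d) ` S) + d \<le> Inf S"
    by (rule cInf_greatest[OF assms(1)]) (use cInf_lower[OF _ bb] in force)
  then show "Inf ((\<lambda>t. t - d) ` S) \<le> Inf S - d" by simp
qed

lemma Sup_shift:
  fixes S :: "real set"
  assumes "S \<noteq> {}" "bdd_above S"
  shows "Sup ((\<lambda>t. t - d) ` S) = Sup S - d"
proof (rule antisym)
  have ne: "(\<lambda>t. t - d) ` S \<noteq> {}" using assms by simp
  have bb: "bdd_above ((\<lambda>t. t - d) ` S)"
  proof -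
    obtain m where "\<And>s. s \<in> S \<Longrightarrow> s \<le> m" using assms(2) unfolding bdd_above_def by blast
    then show ?thesis by (intro bdd_aboveI[of _ "m - d"]) auto
  qed
  show "Sup ((\<lambda>t. t - d) ` S) \<le> Sup S - d"
    by (rule cSup_least[OF ne]) (use cSup_upper[OF _ assms(2)] in auto)
  have "Sup S \<le> Sup ((\<lambda>t. t - d) ` S) + d"
    by (rule cSup_least[OF assms(1)]) (use cSup_upper[OF _ bb] in force)
  then show "Sup S - d \<le> Sup ((\<lambda>t. t - d) ` S)" by simp
qed

lemma lin_convex: "convex_on {0..1} (\<lambda>x::real. x * c)"
  by (auto simp: convex_on_def algebra_simps)

lemma lin_concave: "concave_on {0..1} (\<lambda>x::real. x * c)"
  by (auto simp: concave_on_def convex_on_def algebra_simps)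

lemma lcm_shift:
  assumes M: "\<And>x. x \<in> {0..1} \<Longrightarrow> \<bar>f x\<bar> \<le> M" and u: "u \<in> {0..1}"
  shows "lcm01 (\<lambda>x. f x - x * c) u = lcm01 f u - u * c"
proof -
  define S where "S = {g u | g. concave_on {0..1} g \<and> (\<forall>x\<in>{0..1}. f x \<le> g x)}"
  have eq: "{g u | g. concave_on {0..1} g \<and> (\<forall>x\<in>{0..1}. f x - x * c \<le> g x)} = (\<lambda>t. t - u * c) ` S"
  proof (intro equalityI subsetI)
    fix t assume "t \<in> {g u | g. concave_on {0..1} g \<and> (\<forall>x\<in>{0..1}. f x - x * c \<le> g x)}"
    then obtain g where g: "t = g u" "concave_on {0..1} g" "\<forall>x\<in>{0..1}. f x - x * c \<le> g x" by blast
    have "concave_on {0..1} (\<lambda>x. g x + x * c)" by (rule concave_on_add[OF g(2) lin_concave])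
    moreover have "\<forall>x\<in>{0..1}. f x \<le> g x + x * c" using g(3) by force
    ultimately have "\<exists>h. g u + u * c = h u \<and> concave_on {0..1} h \<and> (\<forall>x\<in>{0..1}. f x \<le> h x)"
      by (intro exI[of _ "\<lambda>x. g x + x * c"]) simp
    then have "g u + u * c \<in> S" unfolding S_def by simp
    then show "t \<in> (\<lambda>t. t - u * c) ` S" using g(1) by (intro image_eqI[of _ _ "g u + u * c"]) auto
  next
    fix t assume "t \<in> (\<lambda>t. t - u * c) ` S"
    then obtain g where g: "t = g u - u * c" "concave_on {0..1} g" "\<forall>x\<in>{0..1}. f x \<le> g x" unfolding S_def by blast
    have "concave_on {0..1} (\<lambda>x. g x - x * c)" by (rule concave_on_diff[OF g(2) lin_convex])
    moreover have "\<forall>x\<in>{0..1}. f x - x * c \<le> g x - x * c" using g(3) by force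
    ultimately have "\<exists>h. g u - u * c = h u \<and> concave_on {0..1} h \<and> (\<forall>x\<in>{0..1}. f x - x * c \<le> h x)"
      by (intro exI[of _ "\<lambda>x. g x - x * c"]) simp
    then show "t \<in> {g u | g. concave_on {0..1} g \<and> (\<forall>x\<in>{0..1}. f x - x * c \<le> g x)}" using g(1) by simp
  qed
  have ne: "S \<noteq> {}"
  proof -
    have "concave_on {0..1} (\<lambda>x::real. M)" by (simp add: concave_on_const)
    moreover have "\<forall>x\<in>{0..1}. f x \<le> M" using M by (meson abs_le_D1)
    ultimately have "\<exists>h. M = h u \<and> concave_on {0..1} h \<and> (\<forall>x\<in>{0..1}. f x \<le> h x)"
      by (intro exI[of _ "\<lambda>x. M"]) simp
    then have "M \<in> S" unfolding S_def by simp
    then show ?thesis by blast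
  qed
  have bb: "bdd_below S"
  proof (rule bdd_belowI[of _ "f u"])
    fix t assume "t \<in> S"
    then show "f u \<le> t" using u unfolding S_def by blast
  qed
  show ?thesis unfolding lcm01_def eq S_def[symmetric] by (rule Inf_shift[OF ne bb])
qed

lemma gcm_shift:
  assumes M: "\<And>x. x \<in> {0..1} \<Longrightarrow> \<bar>f x\<bar> \<le> M" and u: "u \<in> {0..1}"
  shows "gcm01 (\<lambda>x. f x - x * c) u = gcm01 f u - u * c"
proof -
  define S where "S = {g u | g. convex_on {0..1} g \<and> (\<forall>x\<in>{0..1}. g x \<le> f x)}"
  have eq: "{g u | g. convex_on {0..1} g \<and> (\<forall>x\<in>{0..1}. g x \<le> f x - x * c)} = (\<lambda>t. t - u * c) ` S"
  proof (intro equalityI subsetI)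
    fix t assume "t \<in> {g u | g. convex_on {0..1} g \<and> (\<forall>x\<in>{0..1}. g x \<le> f x - x * c)}"
    then obtain g where g: "t = g u" "convex_on {0..1} g" "\<forall>x\<in>{0..1}. g x \<le> f x - x * c" by blast
    have "convex_on {0..1} (\<lambda>x. g x + x * c)" by (rule convex_on_add[OF g(2) lin_convex])
    moreover have "\<forall>x\<in>{0..1}. g x + x * c \<le> f x" using g(3) by force
    ultimately have "\<exists>h. g u + u * c = h u \<and> convex_on {0..1} h \<and> (\<forall>x\<in>{0..1}. h x \<le> f x)"
      by (intro exI[of _ "\<lambda>x. g x + x * c"]) simp
    then have "g u + u * c \<in> S" unfolding S_def by simp
    then show "t \<in> (\<lambda>t. t - u * c) ` S" using g(1) by (intro image_eqI[of _ _ "g u + u * c"]) auto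
  next
    fix t assume "t \<in> (\<lambda>t. t - u * c) ` S"
    then obtain g where g: "t = g u - u * c" "convex_on {0..1} g" "\<forall>x\<in>{0..1}. g x \<le> f x" unfolding S_def by blast
    have "convex_on {0..1} (\<lambda>x. g x - x * c)" by (rule convex_on_diff[OF g(2) lin_concave])
    moreover have "\<forall>x\<in>{0..1}. g x - x * c \<le> f x - x * c" using g(3) by force
    ultimately have "\<exists>h. g u - u * c = h u \<and> convex_on {0..1} h \<and> (\<forall>x\<in>{0..1}. h x \<le> f x - x * c)"
      by (intro exI[of _ "\<lambda>x. g x - x * c"]) simp
    then show "t \<in> {g u | g. convex_on {0..1} g \<and> (\<forall>x\<in>{0..1}. g x \<le> f x - x * c)}" using g(1) by simp
  qed
  have ne: "S \<noteq> {}"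
  proof -
    have "convex_on {0..1} (\<lambda>x::real. - M)" by (simp add: convex_on_const)
    moreover have "\<forall>x\<in>{0..1}. - M \<le> f x" using M by (meson abs_le_D2 minus_le_iff)
    ultimately have "\<exists>h. - M = h u \<and> convex_on {0..1} h \<and> (\<forall>x\<in>{0..1}. h x \<le> f x)"
      by (intro exI[of _ "\<lambda>x. - M"]) simp
    then have "- M \<in> S" unfolding S_def by simp
    then show ?thesis by blast
  qed
  have bb: "bdd_above S"
  proof (rule bdd_aboveI[of _ "f u"])
    fix t assume "t \<in> S"
    then show "t \<le> f u" using u unfolding S_def by blast
  qed
  show ?thesis unfolding gcm01_def eq S_def[symmetric] by (rule Sup_shift[OF ne bb])
qed

theorem lemma5p4:
  fixes f :: "real \<Rightarrow> real"
  assumes "f \<in> classA"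
  defines "fhat \<equiv> (\<lambda>u. f u - u * f 1)"
  shows "fhat \<in> classB \<and> A01 fhat = A01 f \<and> Gamma01 fhat \<le> Gamma01 f \<and>
         (Gamma01 fhat = Gamma01 f \<longleftrightarrow> f 1 = 0)"
proof -
  have ac: "abs_cont_01 f" and f0: "f 0 = 0" and int2: "(\<lambda>u. (deriv f u)\<^sup>2) integrable_on {0..1}"
    using assms(1) unfolding classA_def by auto
  define a where "a = f 1"
  define N where "N = {x \<in> {0..1}. \<not> (\<exists>L. (f has_real_derivative L) (at x))}"
  have negN: "negligible N" unfolding N_def by (rule ac_ae_diff[OF ac])
  have Df: "(f has_real_derivative deriv f x) (at x)" if x01: "x \<in> {0..1}" and xN: "x \<notin> N" for x
  proof -
    obtain L where "(f has_real_derivative L) (at x)" using x01 xN unfolding N_def by blast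
    then show ?thesis using DERIV_imp_deriv by metis
  qed
  have Dfh: "deriv fhat x = deriv f x - a" if x01: "x \<in> {0..1}" and xN: "x \<notin> N" for x
  proof -
    have "((\<lambda>u. f u - u * a) has_real_derivative deriv f x - 1 * a) (at x)"
      by (rule DERIV_diff[OF Df[OF x01 xN] DERIV_cmult_right[OF DERIV_ident]])
    then show ?thesis unfolding fhat_def a_def[symmetric] by (simp add: DERIV_imp_deriv)
  qed
  have ftc: "((\<lambda>x. if x \<in> N then 0 else deriv f x) has_integral (f 1 - f 0)) {0..1}"
    by (rule ftc_ac[OF ac negN Df])
  have "(deriv f has_integral (f 1 - f 0)) {0..1}"
    by (rule has_integral_spike[OF negN _ ftc]) auto
  then have I1: "(deriv f has_integral a) {0..1}" by (simp add: f0 a_def)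
  define I2 where "I2 = integral {0..1} (\<lambda>u. (deriv f u)\<^sup>2)"
  have I2: "((\<lambda>u. (deriv f u)\<^sup>2) has_integral I2) {0..1}" using int2 unfolding I2_def by (simp add: has_integral_integral)
  have q: "((\<lambda>u. (deriv f u)\<^sup>2 - (2 * a) * deriv f u + a\<^sup>2) has_integral (I2 - (2 * a) * a + a\<^sup>2)) {0..1}"
  proof -
    have c: "((\<lambda>u::real. a\<^sup>2) has_integral a\<^sup>2) {0..1}" using has_integral_const_real[of "a\<^sup>2" 0 1] by simp
    have m: "((\<lambda>u. (2 * a) * deriv f u) has_integral (2 * a) * a) {0..1}" using has_integral_cmul[OF I1, of "2 * a"] by simp
    show ?thesis by (intro has_integral_add has_integral_diff I2 m c)
  qed
  have Ih: "((\<lambda>u. (deriv fhat u)\<^sup>2) has_integral (I2 - a\<^sup>2)) {0..1}"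
  proof -
    have "((\<lambda>u. (deriv fhat u)\<^sup>2) has_integral (I2 - (2 * a) * a + a\<^sup>2)) {0..1}"
    proof (rule has_integral_spike[OF negN _ q])
      fix x assume "x \<in> {0..1} - N"
      then have dd: "deriv fhat x = deriv f x - a" using Dfh[of x] by simp
      show "(deriv fhat x)\<^sup>2 = (deriv f x)\<^sup>2 - (2 * a) * deriv f x + a\<^sup>2"
        unfolding dd power2_eq_square by (simp add: algebra_simps)
    qed
    moreover have "I2 - (2 * a) * a + a\<^sup>2 = I2 - a\<^sup>2" by (simp add: power2_eq_square)
    ultimately show ?thesis by simp
  qed
  have Gf: "Gamma01 f = I2" unfolding Gamma01_def I2_def ..
  have Gh: "Gamma01 fhat = I2 - a\<^sup>2" unfolding Gamma01_def using Ih by (rule integral_unique)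
  have acH: "abs_cont_01 fhat" unfolding fhat_def by (rule ac_linear[OF ac])
  have classB: "fhat \<in> classB"
    unfolding classB_def classA_def using acH Ih f0 by (auto simp: fhat_def)
  obtain M where M: "\<And>x. x \<in> {0..1} \<Longrightarrow> norm (f x) \<le> M"
    using continuous_on_compact_bound[OF compact_Icc ac_cont[OF ac]] by metis
  have M': "\<And>x. x \<in> {0..1} \<Longrightarrow> \<bar>f x\<bar> \<le> M" using M by simp
  have A: "A01 fhat = A01 f"
    unfolding A01_def
  proof (rule integral_cong)
    fix u :: real assume u: "u \<in> {0..1}"
    show "lcm01 fhat u - gcm01 fhat u = lcm01 f u - gcm01 f u"
      unfolding fhat_def using lcm_shift[OF M' u, where c="f 1"] gcm_shift[OF M' u, where c="f 1"] by simp
  qed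
  have "Gamma01 fhat \<le> Gamma01 f" using Gf Gh by simp
  moreover have "Gamma01 fhat = Gamma01 f \<longleftrightarrow> f 1 = 0" using Gf Gh unfolding a_def by simp
  ultimately show ?thesis using classB A by blast
qed

end
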